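(* Let $u_\pm\in L^\infty(\mathbb{R};\mathbb{R})$ and let $\mathcal{L}=\begin{pmatrix} -u_- & i\partial_x\\ i\partial_x & -u_+\end{pmatrix}:H^1(\mathbb{R};\mathbb{C}^2)\to L^2(\mathbb{R};\mathbb{C}^2)$. If $\lambda\in\mathbb{R}$ is an eigenvalue of $\mathcal{L}$ (i.e. $\mathcal{L}\Psi=\lambda\Psi$ for some $\Psi\in H^1(\mathbb{R};\mathbb{C}^2)\setminus\{0\}$), then for every $c\in\mathbb{R}$, $$c-\lambda\le \|(u_-+c)^{(+)}\|_{L^\infty}\quad\text{or}\quad c+\lambda\le \|(u_+-c)^{(-)}\|_{L^\infty}.$$ In particular, if $u_+\ge c$ and $-u_-\ge c$ a.e. for some $c>0$, then $\mathcal{L}$ has no eigenvalues in $(-c,c)$.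
   Context: For a real function $f$, $f^{(+)}=\max\{f,0\}$ and $f^{(-)}=\max\{-f,0\}$ denote its positive and negative parts, so $f=f^{(+)}-f^{(-)}$. *)

theory Defs
  imports "HOL-Analysis.Analysis" "HOL-Probability.Essential_Supremum"
begin

definition Linf :: "(real \<Rightarrow> real) \<Rightarrow> bool" where
  "Linf u \<longleftrightarrow> u \<in> borel_measurable lebesgue \<and> (\<exists>M. AE x in lebesgue. \<bar>u x\<bar> \<le> M)"

definition Linf_norm :: "(real \<Rightarrow> real) \<Rightarrow> ereal" where
  "Linf_norm f = esssup lebesgue (\<lambda>x. ereal \<bar>f x\<bar>)"

definition pos_part :: "(real \<Rightarrow> real) \<Rightarrow> real \<Rightarrow> real" where
  "pos_part f x = max (f x) 0"
definition neg_part :: "(real \<Rightarrow> real) \<Rightarrow> real \<Rightarrow> real" where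
  "neg_part f x = max (- f x) 0"

definition L2 :: "(real \<Rightarrow> complex) \<Rightarrow> bool" where
  "L2 f \<longleftrightarrow> f \<in> borel_measurable lebesgue \<and> integrable lebesgue (\<lambda>x. (cmod (f x))^2)"

definition test_fun :: "(real \<Rightarrow> real) \<Rightarrow> bool" where
  "test_fun \<phi> \<longleftrightarrow> (\<forall>x. \<phi> differentiable (at x)) \<and> continuous_on UNIV (deriv \<phi>)
     \<and> (\<exists>R. \<forall>x. \<bar>x\<bar> > R \<longrightarrow> \<phi> x = 0)"

definition weak_deriv :: "(real \<Rightarrow> complex) \<Rightarrow> (real \<Rightarrow> complex) \<Rightarrow> bool" where
  "weak_deriv f g \<longleftrightarrow>
     (\<forall>\<phi>. test_fun \<phi> \<longrightarrow>
        integrable lebesgue (\<lambda>x. f x * of_real (deriv \<phi> x)) \<and>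
        integrable lebesgue (\<lambda>x. g x * of_real (\<phi> x)) \<and>
        (LINT x|lebesgue. f x * of_real (deriv \<phi> x)) = - (LINT x|lebesgue. g x * of_real (\<phi> x)))"

definition H1_with_deriv :: "(real \<Rightarrow> complex) \<Rightarrow> (real \<Rightarrow> complex) \<Rightarrow> bool" where
  "H1_with_deriv f f' \<longleftrightarrow> L2 f \<and> L2 f' \<and> weak_deriv f f'"

text \<open>lambda is an eigenvalue of L = [[-u_-, i d/dx],[i d/dx, -u_+]] on H^1(R;C^2):
  there is Psi = (psi1, psi2) in H^1, not a.e. zero, with L Psi = lambda Psi in L^2 (i.e. a.e.).\<close>
definition is_eigenvalue :: "(real \<Rightarrow> real) \<Rightarrow> (real \<Rightarrow> real) \<Rightarrow> complex \<Rightarrow> bool" where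
  "is_eigenvalue um up lam \<longleftrightarrow>
     (\<exists>\<psi>1 \<psi>2 \<psi>1' \<psi>2'. H1_with_deriv \<psi>1 \<psi>1' \<and> H1_with_deriv \<psi>2 \<psi>2' \<and>
        \<not> (AE x in lebesgue. \<psi>1 x = 0 \<and> \<psi>2 x = 0) \<and>
        (AE x in lebesgue.
           - of_real (um x) * \<psi>1 x + \<i> * \<psi>2' x = lam * \<psi>1 x \<and>
           \<i> * \<psi>1' x - of_real (up x) * \<psi>2 x = lam * \<psi>2 x))"

end

theory Submission
  imports Defs
begin

lemma sigma_finite_lebesgue_real: "sigma_finite_measure (lebesgue :: real measure)"
proof
  show "\<exists>A. countable A \<and> A \<subseteq> sets (lebesgue::real measure) \<and> \<Union> A = space lebesgue \<and> (\<forall>a\<in>A. emeasure lebesgue a \<noteq> \<infinity>)"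
    apply (rule exI[of _ "range (\<lambda>n::nat. {-real n..real n})"])
    apply (auto simp: emeasure_lborel_cbox_eq)
    by (metis abs_le_D1 abs_le_D2 minus_le_iff real_arch_simple)
qed

interpretation leb_pair: pair_sigma_finite "lebesgue :: real measure" "lebesgue :: real measure"
  by (simp add: pair_sigma_finite.intro sigma_finite_lebesgue_real)

lemma fst_leb_meas[measurable]: "fst \<in> borel_measurable ((lebesgue::real measure) \<Otimes>\<^sub>M lebesgue)"
  using measurable_compose[OF measurable_fst id_borel_measurable_lebesgue] by (simp add: id_def)
lemma snd_leb_meas[measurable]: "snd \<in> borel_measurable ((lebesgue::real measure) \<Otimes>\<^sub>M lebesgue)"
  using measurable_compose[OF measurable_snd id_borel_measurable_lebesgue] by (simp add: id_def)

lemma prod_integrable: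
  fixes u v :: "real \<Rightarrow> complex"
  assumes u: "integrable lebesgue u" and v: "integrable lebesgue v"
  shows "integrable (lebesgue \<Otimes>\<^sub>M lebesgue) (\<lambda>p. v (fst p) * u (snd p))"
proof (rule leb_pair.Fubini_integrable)
  show "(\<lambda>p. v (fst p) * u (snd p)) \<in> borel_measurable (lebesgue \<Otimes>\<^sub>M lebesgue)"
    using u v by measurable
  have "(\<lambda>x. LINT y|lebesgue. norm (v (fst (x, y)) * u (snd (x, y)))) = (\<lambda>x. norm (v x) * (LINT y|lebesgue. norm (u y)))"
    by (simp add: norm_mult)
  then show "integrable lebesgue (\<lambda>x. LINT y|lebesgue. norm (v (fst (x, y)) * u (snd (x, y))))"
    using v by (simp add: integrable_norm)
  show "AE x in lebesgue. integrable lebesgue (\<lambda>y. v (fst (x, y)) * u (snd (x, y)))"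
    using u by simp
qed

lemma FL:
  fixes u v :: "real \<Rightarrow> complex"
  assumes u: "integrable lebesgue u" and v: "integrable lebesgue v"
  shows "(LINT t|lebesgue. indicator {a..b} t *\<^sub>R (u t * (LINT s|lebesgue. indicator {a..t} s *\<^sub>R v s)))
       = (LINT s|lebesgue. indicator {a..b} s *\<^sub>R (v s * (LINT t|lebesgue. indicator {s..b} t *\<^sub>R u t)))"
proof -
  define H where "H = (\<lambda>s t. if a \<le> s \<and> s \<le> t \<and> t \<le> b then v s * u t else 0)"
  have meas: "(\<lambda>p. H (fst p) (snd p)) \<in> borel_measurable (lebesgue \<Otimes>\<^sub>M lebesgue)"
    unfolding H_def using u v by measurable
  have int: "integrable (lebesgue \<Otimes>\<^sub>M lebesgue) (\<lambda>(s, t). H s t)"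
  proof -
    have "integrable (lebesgue \<Otimes>\<^sub>M lebesgue) (\<lambda>p. H (fst p) (snd p))"
      apply (rule Bochner_Integration.integrable_bound[OF prod_integrable[OF u v] meas])
      by (auto simp: H_def norm_mult)
    then show ?thesis by (simp add: case_prod_beta')
  qed
  have eq1: "(\<lambda>t. LINT s|lebesgue. H s t) = (\<lambda>t. indicator {a..b} t *\<^sub>R (u t * (LINT s|lebesgue. indicator {a..t} s *\<^sub>R v s)))"
  proof
    fix t
    have "(\<lambda>s. H s t) = (\<lambda>s. (indicator {a..t} s *\<^sub>R v s) * (if t \<le> b then u t else 0))"
      by (auto simp: H_def indicator_def)
    then have "(LINT s|lebesgue. H s t) = (LINT s|lebesgue. indicator {a..t} s *\<^sub>R v s) * (if t \<le> b then u t else 0)"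
      using integral_mult_left_zero[of lebesgue "\<lambda>s. indicator {a..t} s *\<^sub>R v s" "(if t \<le> b then u t else 0)"] by simp
    moreover have "t < a \<Longrightarrow> (\<lambda>s. indicator {a..t} s *\<^sub>R v s) = (\<lambda>s. 0)"
      by (auto simp: indicator_def)
    ultimately show "(LINT s|lebesgue. H s t) = indicator {a..b} t *\<^sub>R (u t * (LINT s|lebesgue. indicator {a..t} s *\<^sub>R v s))"
      by (cases "t < a") (auto simp: indicator_def)
  qed
  have eq2: "(\<lambda>s. LINT t|lebesgue. H s t) = (\<lambda>s. indicator {a..b} s *\<^sub>R (v s * (LINT t|lebesgue. indicator {s..b} t *\<^sub>R u t)))"
  proof
    fix s
    have "(\<lambda>t. H s t) = (\<lambda>t. (if a \<le> s then v s else 0) * (indicator {s..b} t *\<^sub>R u t))"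
      by (auto simp: H_def indicator_def)
    then have "(LINT t|lebesgue. H s t) = (if a \<le> s then v s else 0) * (LINT t|lebesgue. indicator {s..b} t *\<^sub>R u t)"
      using integral_mult_right_zero[of lebesgue "(if a \<le> s then v s else 0)" "\<lambda>t. indicator {s..b} t *\<^sub>R u t"] by simp
    moreover have "b < s \<Longrightarrow> (\<lambda>t. indicator {s..b} t *\<^sub>R u t) = (\<lambda>s. 0)"
      by (auto simp: indicator_def)
    ultimately show "(LINT t|lebesgue. H s t) = indicator {a..b} s *\<^sub>R (v s * (LINT t|lebesgue. indicator {s..b} t *\<^sub>R u t))"
      by (cases "b < s") (auto simp: indicator_def)
  qed
  from leb_pair.Fubini_integral[OF int] eq1 eq2 show ?thesis by simp
qed

lemma TF:
  fixes \<psi> :: "real \<Rightarrow> real"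
  assumes cont: "continuous_on UNIV \<psi>" and R: "R > 0" and supp: "\<And>x. R \<le> \<bar>x\<bar> \<Longrightarrow> \<psi> x = 0"
    and int0: "integral {-R..R} \<psi> = 0"
  shows "\<exists>\<phi>. test_fun \<phi> \<and> (\<forall>x. deriv \<phi> x = \<psi> x)"
proof -
  define \<phi> where "\<phi> x = integral {-(R+1)..x} \<psi>" for x
  have left: "\<phi> x = 0" if "x < -R" for x
  proof -
    have "\<phi> x = integral {-(R+1)..x} (\<lambda>_. 0::real)"
      unfolding \<phi>_def using that by (intro integral_cong) (auto intro!: supp)
    then show ?thesis by simp
  qed
  have right: "\<phi> x = 0" if "R \<le> x" for x
  proof -
    have "\<phi> x = integral {-(R+1)..x} (\<lambda>y. if y \<in> {-R..R} then \<psi> y else 0)"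
      unfolding \<phi>_def by (intro integral_cong) (auto intro!: supp)
    also have "\<dots> = integral ({-R..R} \<inter> {-(R+1)..x}) \<psi>"
      by (rule integral_restrict_Int)
    also have "{-R..R} \<inter> {-(R+1)..x} = {-R..R}" using that by auto
    finally show ?thesis using int0 by simp
  qed
  have D: "(\<phi> has_real_derivative \<psi> x) (at x)" for x
  proof (cases "x < -R")
    case True
    have "((\<lambda>_. 0::real) has_real_derivative 0) (at x)" by simp
    then have "(\<phi> has_real_derivative 0) (at x)"
      apply (rule has_field_derivative_transform_within_open[where S="{..< -R}"]) using True left by auto
    then show ?thesis using supp[of x] True by simp
  next
    case False
    have "(\<phi> has_real_derivative \<psi> x) (at x within {-(R+1)..x+1})"
      unfolding \<phi>_def using False R
      by (intro integral_has_real_derivative continuous_on_subset[OF cont]) simp_all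
    moreover have "x \<in> interior {-(R+1)..x+1}" using False R by auto
    ultimately show ?thesis by (metis at_within_interior)
  qed
  have "test_fun \<phi>"
    unfolding test_fun_def
  proof (intro conjI allI exI)
    fix x show "\<phi> differentiable (at x)"
      using D by (meson differentiableI has_field_derivative_imp_has_derivative)
  next
    have "deriv \<phi> = \<psi>" using D by (simp add: DERIV_imp_deriv ext)
    then show "continuous_on UNIV (deriv \<phi>)" using cont by simp
  next
    fix x show "R < \<bar>x\<bar> \<longrightarrow> \<phi> x = 0"
      using left right by (cases "x < 0") auto
  qed
  moreover have "\<forall>x. deriv \<phi> x = \<psi> x" using D by (simp add: DERIV_imp_deriv)
  ultimately show ?thesis by blast
qed

definition ramp :: "nat \<Rightarrow> real \<Rightarrow> real \<Rightarrow> real \<Rightarrow> real" where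
  "ramp n a b x = max 0 (min 1 (min (real (Suc n) * (x - a) + 1) (real (Suc n) * (b - x) + 1)))"

lemma cont_leb_meas: "continuous_on UNIV f \<Longrightarrow> (f::real\<Rightarrow>'b::real_normed_vector) \<in> borel_measurable lebesgue"
  by (metis measurable_lborel2 borel_measurable_continuous_onI measurable_completion)

lemma clamp_zero1: "A \<le> 0 \<Longrightarrow> max 0 (min 1 (min A B)) = (0::real)" by auto
lemma clamp_zero2: "B \<le> 0 \<Longrightarrow> max 0 (min 1 (min A B)) = (0::real)" by auto

lemma ramp_cont: "continuous_on UNIV (ramp n a b)"
  unfolding ramp_def by (intro continuous_intros)

lemma ramp_bounds: "0 \<le> ramp n a b x" "ramp n a b x \<le> 1"
  unfolding ramp_def by auto

lemma ramp_supp: "x \<notin> {a-1..b+1} \<Longrightarrow> ramp n a b x = 0"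
proof -
  assume x: "x \<notin> {a-1..b+1}"
  have "real (Suc n) \<ge> 1" by simp
  show ?thesis
  proof (cases "x < a - 1")
    case True
    then have "real (Suc n) * (x - a) \<le> (x - a)"
      using mult_right_mono_neg[of 1 "real (Suc n)" "x-a"] by auto
    then have "real (Suc n) * (x - a) + 1 \<le> 0" using True by linarith
    then show ?thesis unfolding ramp_def by (rule clamp_zero1)
  next
    case False
    then have "x > b + 1" using x by auto
    then have "real (Suc n) * (b - x) \<le> (b - x)"
      using mult_right_mono_neg[of 1 "real (Suc n)" "b-x"] by auto
    then have "real (Suc n) * (b - x) + 1 \<le> 0" using \<open>x > b+1\<close> by linarith
    then show ?thesis unfolding ramp_def by (rule clamp_zero2)
  qed
qed

lemma ramp_le_ind: "ramp n a b x \<le> indicator {a-1..b+1} x"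
  using ramp_supp[of x a b n] ramp_bounds[of n a b x] by (cases "x \<in> {a-1..b+1}") auto

lemma ramp_one: "x \<in> {a..b} \<Longrightarrow> ramp n a b x = 1"
  unfolding ramp_def by auto

lemma ramp_lim: "(\<lambda>n. ramp n a b x) \<longlonglongrightarrow> indicator {a..b} x"
proof (cases "x \<in> {a..b}")
  case True then show ?thesis by (simp add: ramp_one)
next
  case False
  then have d: "a - x > 0 \<or> x - b > 0" by auto
  then obtain d where d: "d > 0" "d = (if a - x > 0 then a - x else x - b)" by auto
  obtain N :: nat where N: "1 / d < real N" using reals_Archimedean2 by blast
  have "ramp n a b x = 0" if "n \<ge> N" for n
  proof -
    have "real (Suc n) > 1 / d" using N that by linarith
    then have "real (Suc n) * d > 1" using d(1) by (simp add: field_simps)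
    then show ?thesis using d False unfolding ramp_def by (auto split: if_splits simp: algebra_simps)
  qed
  then have "eventually (\<lambda>n. ramp n a b x = 0) sequentially" by (auto simp: eventually_sequentially)
  then have "(\<lambda>n. ramp n a b x) \<longlonglongrightarrow> 0" by (rule tendsto_eventually)
  then show ?thesis using False by simp
qed

lemma ramp_meas[measurable]: "ramp n a b \<in> borel_measurable lebesgue"
  using ramp_cont by (rule cont_leb_meas)

lemma ramp_integrable: "integrable lebesgue (ramp n a b)"
proof (rule Bochner_Integration.integrable_bound[where f="indicator {a-1..b+1}"])
  show "integrable lebesgue (indicator {a - 1..b + 1} :: real \<Rightarrow> real)"
    using emeasure_lborel_cbox_finite[of "a-1" "b+1"] by (simp add: integrable_indicator_iff)
qed (use ramp_le_ind ramp_bounds in auto)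

lemma LD:
  fixes h :: "real \<Rightarrow> complex"
  assumes loc: "\<And>a b. integrable lebesgue (\<lambda>x. indicator {a..b} x *\<^sub>R h x)"
    and eq: "\<And>a b. a \<le> b \<Longrightarrow> (LINT x|lebesgue. indicator {a..b} x *\<^sub>R h x) = of_real (b - a) * K"
  shows "AE x in lebesgue. h x = K"
proof -
  have si: "set_integrable lebesgue {a..b} h" for a b
    using loc by (simp add: set_integrable_def)
  have hk: "integral {a..b} h = of_real (b - a) * K" if "a \<le> b" for a b
    using set_lebesgue_integral_eq_integral(2)[OF si[of a b]] eq[OF that]
    by (simp add: set_lebesgue_integral_def)
  have "\<And>a b. h integrable_on cbox a b"
    using set_lebesgue_integral_eq_integral(1)[OF si] by simp
  then obtain N where N: "negligible N"
    and lim: "\<And>x e. \<lbrakk>x \<notin> N; 0 < e\<rbrakk> \<Longrightarrow>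
               \<exists>d>0. \<forall>t. 0 < t \<and> t < d \<longrightarrow>
                         norm(integral (cbox x (x + t *\<^sub>R One)) h /\<^sub>R t ^ DIM(real) - h x) < e"
    by (rule integrable_ccontinuous_explicit) blast
  have "h x = K" if "x \<notin> N" for x
  proof (rule ccontr)
    assume ne: "h x \<noteq> K"
    then have e: "norm (K - h x) > 0" by simp
    from lim[OF that e] obtain d where d: "d > 0"
      and dd: "\<And>t. 0 < t \<and> t < d \<longrightarrow> norm(integral (cbox x (x + t *\<^sub>R One)) h /\<^sub>R t ^ DIM(real) - h x) < norm (K - h x)"
      by blast
    have "d/2 > 0" "d/2 < d" using d by auto
    then have "norm(integral {x..x + d/2} h /\<^sub>R (d/2) - h x) < norm (K - h x)"
      using dd[of "d/2"] by simp
    moreover have "integral {x..x + d/2} h /\<^sub>R (d/2) = K"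
      using hk[of x "x + d/2"] d by (simp add: scaleR_conv_of_real field_simps)
    ultimately show False by simp
  qed
  moreover have "AE x in lebesgue. x \<notin> N"
    using N by (simp add: negligible_iff_null_sets AE_not_in)
  ultimately show ?thesis by auto
qed

lemma int_eq_HK:
  fixes \<psi> :: "real \<Rightarrow> real"
  assumes cont: "continuous_on UNIV \<psi>" and supp: "\<And>x. R \<le> \<bar>x\<bar> \<Longrightarrow> \<psi> x = 0"
  shows "(LINT x|lebesgue. \<psi> x) = integral {-R..R} \<psi>"
proof -
  have "(LINT x|lebesgue. \<psi> x) = (LINT x|lebesgue. indicator {-R..R} x *\<^sub>R \<psi> x)"
    by (rule Bochner_Integration.integral_cong) (auto simp: indicator_def intro!: supp)
  also have "\<dots> = integral {-R..R} \<psi>"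
    using set_lebesgue_integral_eq_integral(2)[OF absolutely_integrable_continuous_real[OF continuous_on_subset[OF cont]]]
    by (simp add: set_lebesgue_integral_def)
  finally show ?thesis .
qed

lemma FunL_step1:
  fixes h :: "real \<Rightarrow> complex" and \<psi> :: "real \<Rightarrow> real"
  assumes wk: "\<And>\<phi>. test_fun \<phi> \<Longrightarrow> (LINT x|lebesgue. h x * of_real (deriv \<phi> x)) = 0"
    and cont: "continuous_on UNIV \<psi>" and R: "R > 0" and supp: "\<And>x. R \<le> \<bar>x\<bar> \<Longrightarrow> \<psi> x = 0"
    and z: "(LINT x|lebesgue. \<psi> x) = 0"
  shows "(LINT x|lebesgue. h x * of_real (\<psi> x)) = 0"
proof -
  have "integral {-R..R} \<psi> = 0" using int_eq_HK[OF cont supp] z by simp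
  from TF[OF cont R supp this] obtain \<phi> where "test_fun \<phi>" "\<forall>x. deriv \<phi> x = \<psi> x" by blast
  with wk[of \<phi>] show ?thesis by simp
qed

lemma ind_integrable: "integrable lebesgue (indicat_real {a..b::real})"
  using emeasure_lborel_cbox_finite[of a b] by (simp add: integrable_indicator_iff)

lemma ind_int: "(a::real) \<le> b \<Longrightarrow> (LINT x|lebesgue. indicator {a..b} x :: real) = b - a"
  by simp

lemma FunL:
  fixes h :: "real \<Rightarrow> complex"
  assumes loc: "\<And>a b. integrable lebesgue (\<lambda>x. indicator {a..b} x *\<^sub>R h x)"
    and hm[measurable]: "h \<in> borel_measurable lebesgue"
    and wk: "\<And>\<phi>. test_fun \<phi> \<Longrightarrow> (LINT x|lebesgue. h x * of_real (deriv \<phi> x)) = 0"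
  shows "\<exists>C. AE x in lebesgue. h x = C"
proof -
  define \<psi>0 where "\<psi>0 = ramp 0 0 1"
  define I0 where "I0 = (LINT x|lebesgue. \<psi>0 x)"
  define K0 where "K0 = (LINT x|lebesgue. h x * of_real (\<psi>0 x))"
  have I0: "I0 \<ge> 1"
  proof -
    have "(LINT x|lebesgue. indicator {0..1::real} x) \<le> I0"
      unfolding I0_def \<psi>0_def
    proof (rule integral_mono)
      show "integrable lebesgue (indicat_real {0..1::real})" by (rule ind_integrable)
      show "integrable lebesgue (ramp 0 0 1)" by (rule ramp_integrable)
      fix x show "indicat_real {0..1} x \<le> ramp 0 0 1 x"
        using ramp_one[of x 0 1 0] ramp_bounds[of 0 0 1 x] by (cases "x \<in> {0..1}") auto
    qed
    then show ?thesis using ind_int[of 0 1] by simp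
  qed
  have int_hr: "integrable lebesgue (\<lambda>x. h x * of_real (ramp n a b x))" for n a b
  proof (rule Bochner_Integration.integrable_bound[OF loc[of "a-1" "b+1"]])
    show "(\<lambda>x. h x * of_real (ramp n a b x)) \<in> borel_measurable lebesgue" by measurable
    show "AE x in lebesgue. norm (h x * complex_of_real (ramp n a b x)) \<le> norm (indicat_real {a - 1..b + 1} x *\<^sub>R h x)"
    proof (rule AE_I2)
      fix x
      have "norm (h x * complex_of_real (ramp n a b x)) = ramp n a b x * norm (h x)"
        using ramp_bounds[of n a b x] by (simp add: norm_mult)
      also have "\<dots> \<le> indicator {a - 1..b + 1} x * norm (h x)"
        by (intro mult_right_mono ramp_le_ind) auto
      finally show "norm (h x * complex_of_real (ramp n a b x)) \<le> norm (indicat_real {a - 1..b + 1} x *\<^sub>R h x)"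
        by (simp add: indicator_def)
    qed
  qed
  have key: "(LINT x|lebesgue. h x * of_real (ramp n a b x)) = of_real ((LINT x|lebesgue. ramp n a b x) / I0) * K0" for n a b
  proof -
    define c where "c = (LINT x|lebesgue. ramp n a b x) / I0"
    define \<psi> where "\<psi> x = ramp n a b x - c * \<psi>0 x" for x
    define R where "R = \<bar>a\<bar> + \<bar>b\<bar> + 3"
    have cont: "continuous_on UNIV \<psi>"
      unfolding \<psi>_def \<psi>0_def using ramp_cont
      by (intro continuous_intros) auto
    have R: "R > 0" unfolding R_def by simp
    have supp: "\<psi> x = 0" if "R \<le> \<bar>x\<bar>" for x
    proof -
      have "x \<notin> {a-1..b+1}" "x \<notin> {0-1..1+1}" using that unfolding R_def by auto
      then show ?thesis unfolding \<psi>_def \<psi>0_def using ramp_supp by simp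
    qed
    have z: "(LINT x|lebesgue. \<psi> x) = 0"
    proof -
      have "(LINT x|lebesgue. \<psi> x) = (LINT x|lebesgue. ramp n a b x) - c * I0"
        unfolding \<psi>_def I0_def \<psi>0_def
        using ramp_integrable by simp
      then show ?thesis unfolding c_def using I0 by simp
    qed
    have "(LINT x|lebesgue. h x * of_real (\<psi> x)) = 0"
      by (rule FunL_step1[OF wk cont R supp z])
    moreover have "(LINT x|lebesgue. h x * of_real (\<psi> x)) = (LINT x|lebesgue. h x * of_real (ramp n a b x)) - of_real c * K0"
    proof -
      have "(\<lambda>x. h x * of_real (\<psi> x)) = (\<lambda>x. h x * of_real (ramp n a b x) - of_real c * (h x * of_real (\<psi>0 x)))"
        unfolding \<psi>_def by (auto simp: algebra_simps)
      then show ?thesis unfolding K0_def \<psi>0_def using int_hr by simp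
    qed
    ultimately show ?thesis unfolding c_def by simp
  qed
  have eqab: "(LINT x|lebesgue. indicator {a..b} x *\<^sub>R h x) = of_real (b - a) * (K0 / of_real I0)" if ab: "a \<le> b" for a b
  proof -
    have lim1: "(\<lambda>n. LINT x|lebesgue. h x * of_real (ramp n a b x)) \<longlonglongrightarrow> (LINT x|lebesgue. indicator {a..b} x *\<^sub>R h x)"
    proof (rule integral_dominated_convergence[where w="\<lambda>x. norm (indicator {a-1..b+1} x *\<^sub>R h x)"])
      show "(\<lambda>x. indicat_real {a..b} x *\<^sub>R h x) \<in> borel_measurable lebesgue"
        using loc[of a b] by (rule borel_measurable_integrable)
      show "\<And>i. (\<lambda>x. h x * complex_of_real (ramp i a b x)) \<in> borel_measurable lebesgue" by measurable
      show "integrable lebesgue (\<lambda>x. norm (indicat_real {a - 1..b + 1} x *\<^sub>R h x))"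
        using loc by (rule integrable_norm)
      show "AE x in lebesgue. (\<lambda>i. h x * complex_of_real (ramp i a b x)) \<longlonglongrightarrow> indicat_real {a..b} x *\<^sub>R h x"
      proof (rule AE_I2)
        fix x
        have "(\<lambda>i. h x * complex_of_real (ramp i a b x)) \<longlonglongrightarrow> h x * complex_of_real (indicator {a..b} x)"
          by (intro tendsto_intros ramp_lim)
        then show "(\<lambda>i. h x * complex_of_real (ramp i a b x)) \<longlonglongrightarrow> indicat_real {a..b} x *\<^sub>R h x"
          by (simp add: scaleR_conv_of_real mult.commute)
      qed
      fix i
      show "AE x in lebesgue. norm (h x * complex_of_real (ramp i a b x)) \<le> norm (indicat_real {a - 1..b + 1} x *\<^sub>R h x)"
      proof (rule AE_I2)
        fix x
        have "norm (h x * complex_of_real (ramp i a b x)) = ramp i a b x * norm (h x)"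
          using ramp_bounds[of i a b x] by (simp add: norm_mult)
        also have "\<dots> \<le> indicator {a - 1..b + 1} x * norm (h x)"
          by (intro mult_right_mono ramp_le_ind) auto
        finally show "norm (h x * complex_of_real (ramp i a b x)) \<le> norm (indicat_real {a - 1..b + 1} x *\<^sub>R h x)"
          by (simp add: indicator_def)
      qed
    qed
    have lim2: "(\<lambda>n. LINT x|lebesgue. ramp n a b x) \<longlonglongrightarrow> (LINT x|lebesgue. indicator {a..b} x :: real)"
    proof (rule integral_dominated_convergence[where w="indicator {a-1..b+1}"])
      show "indicat_real {a..b} \<in> borel_measurable lebesgue"
        using ind_integrable by (rule borel_measurable_integrable)
      show "\<And>i. ramp i a b \<in> borel_measurable lebesgue" by measurable
      show "integrable lebesgue (indicat_real {a - 1..b + 1})" by (rule ind_integrable)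
      show "AE x in lebesgue. (\<lambda>i. ramp i a b x) \<longlonglongrightarrow> indicat_real {a..b} x"
        by (intro AE_I2 ramp_lim)
      fix i show "AE x in lebesgue. norm (ramp i a b x) \<le> indicat_real {a - 1..b + 1} x"
        using ramp_bounds ramp_le_ind by (intro AE_I2) simp
    qed
    then have "(\<lambda>n. of_real ((LINT x|lebesgue. ramp n a b x) / I0) * K0) \<longlonglongrightarrow> of_real ((b - a) / I0) * K0"
      using ind_int[OF ab] I0 by (intro tendsto_intros) auto
    then have "(\<lambda>n. LINT x|lebesgue. h x * of_real (ramp n a b x)) \<longlonglongrightarrow> of_real ((b - a) / I0) * K0"
      by (simp only: key)
    with lim1 have "(LINT x|lebesgue. indicator {a..b} x *\<^sub>R h x) = of_real ((b - a) / I0) * K0"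
      using LIMSEQ_unique by blast
    then show ?thesis by simp
  qed
  have "AE x in lebesgue. h x = K0 / of_real I0"
    by (rule LD[OF loc eqab])
  then show ?thesis by blast
qed

lemma L2_meas: "L2 f \<Longrightarrow> f \<in> borel_measurable lebesgue"
  by (simp add: L2_def)

lemma L2_loc:
  assumes "L2 f" shows "integrable lebesgue (\<lambda>x. indicator {a..b} x *\<^sub>R f x)"
proof (rule Bochner_Integration.integrable_bound[where f="\<lambda>x. indicator {a..b} x + (cmod (f x))^2"])
  show "integrable lebesgue (\<lambda>x. indicat_real {a..b} x + (cmod (f x))\<^sup>2)"
    using assms ind_integrable unfolding L2_def by (intro Bochner_Integration.integrable_add) auto
  show "(\<lambda>x. indicat_real {a..b} x *\<^sub>R f x) \<in> borel_measurable lebesgue"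
    using assms unfolding L2_def by (intro borel_measurable_scaleR borel_measurable_indicator) auto
  show "AE x in lebesgue. norm (indicat_real {a..b} x *\<^sub>R f x) \<le> norm (indicat_real {a..b} x + (cmod (f x))\<^sup>2)"
  proof (rule AE_I2)
    fix x
    have "2 * cmod (f x) \<le> (cmod (f x))^2 + 1" using sum_squares_bound[of "cmod (f x)" 1] by simp
    moreover have "(cmod (f x))^2 \<ge> 0" by simp
    ultimately have "cmod (f x) \<le> 1 + (cmod (f x))^2" by linarith
    then show "norm (indicat_real {a..b} x *\<^sub>R f x) \<le> norm (indicat_real {a..b} x + (cmod (f x))\<^sup>2)"
      by (auto simp: indicator_def)
  qed
qed

lemma L2_prod:
  assumes "L2 f" "L2 g" shows "integrable lebesgue (\<lambda>x. f x * g x)"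
proof (rule Bochner_Integration.integrable_bound[where f="\<lambda>x. (cmod (f x))^2 + (cmod (g x))^2"])
  show "integrable lebesgue (\<lambda>x. (cmod (f x))\<^sup>2 + (cmod (g x))\<^sup>2)"
    using assms unfolding L2_def by (intro Bochner_Integration.integrable_add) auto
  show "(\<lambda>x. f x * g x) \<in> borel_measurable lebesgue"
    using assms unfolding L2_def by (intro borel_measurable_times) auto
  show "AE x in lebesgue. norm (f x * g x) \<le> norm ((cmod (f x))\<^sup>2 + (cmod (g x))\<^sup>2)"
  proof (rule AE_I2)
    fix x
    have "2 * cmod (f x) * cmod (g x) \<le> (cmod (f x))\<^sup>2 + (cmod (g x))\<^sup>2"
      by (rule sum_squares_bound)
    moreover have "0 \<le> cmod (f x) * cmod (g x)" by simp
    moreover have "norm ((cmod (f x))\<^sup>2 + (cmod (g x))\<^sup>2) = (cmod (f x))\<^sup>2 + (cmod (g x))\<^sup>2" by simp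
    moreover have "norm (f x * g x) = cmod (f x) * cmod (g x)" by (simp add: norm_mult)
    ultimately show "norm (f x * g x) \<le> norm ((cmod (f x))\<^sup>2 + (cmod (g x))\<^sup>2)"
      by linarith
  qed
qed

lemma cont_cs_integrable:
  fixes g :: "real \<Rightarrow> 'b::euclidean_space"
  assumes cont: "continuous_on UNIV g" and supp: "\<And>x. R \<le> \<bar>x\<bar> \<Longrightarrow> g x = 0"
  shows "integrable lebesgue g"
proof -
  have "set_integrable lebesgue {-R..R} g"
    using absolutely_integrable_continuous_real[OF continuous_on_subset[OF cont]] by simp
  then have "integrable lebesgue (\<lambda>x. indicator {-R..R} x *\<^sub>R g x)" by (simp add: set_integrable_def)
  moreover have "(\<lambda>x. indicator {-R..R} x *\<^sub>R g x) = g"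
  proof
    fix x show "indicator {-R..R} x *\<^sub>R g x = g x"
    proof (cases "x \<in> {-R..R}")
      case False then have "R \<le> \<bar>x\<bar>" by auto
      then show ?thesis using supp False by simp
    qed simp
  qed
  ultimately show ?thesis by simp
qed

lemma FL':
  fixes u v :: "real \<Rightarrow> complex"
  assumes u: "integrable lebesgue (\<lambda>x. indicator {a..b} x *\<^sub>R u x)" and v: "integrable lebesgue (\<lambda>x. indicator {a..b} x *\<^sub>R v x)"
  shows "(LINT t|lebesgue. indicator {a..b} t *\<^sub>R (u t * (LINT s|lebesgue. indicator {a..t} s *\<^sub>R v s)))
       = (LINT s|lebesgue. indicator {a..b} s *\<^sub>R (v s * (LINT t|lebesgue. indicator {s..b} t *\<^sub>R u t)))"
proof -
  let ?u = "\<lambda>x. indicator {a..b} x *\<^sub>R u x" and ?v = "\<lambda>x. indicator {a..b} x *\<^sub>R v x"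
  have A: "indicator {a..b} t *\<^sub>R (?u t * (LINT s|lebesgue. indicator {a..t} s *\<^sub>R ?v s))
         = indicator {a..b} t *\<^sub>R (u t * (LINT s|lebesgue. indicator {a..t} s *\<^sub>R v s))" for t
  proof (cases "t \<in> {a..b}")
    case True
    have "(\<lambda>s. indicator {a..t} s *\<^sub>R ?v s) = (\<lambda>s. indicator {a..t} s *\<^sub>R v s)"
      using True by (auto simp: indicator_def)
    then show ?thesis using True by simp
  qed simp
  have B: "indicator {a..b} s *\<^sub>R (?v s * (LINT t|lebesgue. indicator {s..b} t *\<^sub>R ?u t))
         = indicator {a..b} s *\<^sub>R (v s * (LINT t|lebesgue. indicator {s..b} t *\<^sub>R u t))" for s
  proof (cases "s \<in> {a..b}")
    case True
    have "(\<lambda>t. indicator {s..b} t *\<^sub>R ?u t) = (\<lambda>t. indicator {s..b} t *\<^sub>R u t)"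
      using True by (auto simp: indicator_def)
    then show ?thesis using True by simp
  qed simp
  show ?thesis using FL[OF u v, of a b] A B by simp
qed

lemma FTC_leb:
  fixes \<phi> :: "real \<Rightarrow> real"
  assumes D: "\<And>x. (\<phi> has_real_derivative \<phi>' x) (at x)" and cont: "continuous_on UNIV \<phi>'" and ab: "a \<le> b"
  shows "(LINT x|lebesgue. indicator {a..b} x *\<^sub>R \<phi>' x) = \<phi> b - \<phi> a"
proof -
  have "(\<phi>' has_integral (\<phi> b - \<phi> a)) {a..b}"
    using ab D
    by (intro fundamental_theorem_of_calculus)
       (auto simp: has_real_derivative_iff_has_vector_derivative[symmetric] intro: has_field_derivative_at_within)
  moreover have "set_integrable lebesgue {a..b} \<phi>'"
    using absolutely_integrable_continuous_real[OF continuous_on_subset[OF cont]] by simp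
  ultimately show ?thesis
    using set_lebesgue_integral_eq_integral(2) by (metis integral_unique set_lebesgue_integral_def)
qed

definition SI :: "(real \<Rightarrow> complex) \<Rightarrow> real \<Rightarrow> real \<Rightarrow> complex" where
  "SI g a b = (LINT t|lebesgue. indicator {a..b} t *\<^sub>R g t)"

definition locint :: "(real \<Rightarrow> complex) \<Rightarrow> bool" where
  "locint g \<longleftrightarrow> (\<forall>a b. integrable lebesgue (\<lambda>x. indicator {a..b} x *\<^sub>R g x))"

lemma locint_set: "locint g \<Longrightarrow> set_integrable lebesgue {a..b} g"
  by (simp add: locint_def set_integrable_def)

lemma locint_HK: "locint g \<Longrightarrow> g integrable_on {a..b}"
  by (rule set_lebesgue_integral_eq_integral(1)[OF locint_set])

lemma SI_HK: "locint g \<Longrightarrow> SI g a b = integral {a..b} g"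
  using set_lebesgue_integral_eq_integral(2)[OF locint_set[of g a b]]
  by (simp add: SI_def set_lebesgue_integral_def)

lemma SI_split: "locint g \<Longrightarrow> a \<le> b \<Longrightarrow> b \<le> c \<Longrightarrow> SI g a c = SI g a b + SI g b c"
  using Henstock_Kurzweil_Integration.integral_combine[where a=a and c=b and b=c and f=g] locint_HK[of g a c] by (simp add: SI_HK)

lemma SI_empty: "locint g \<Longrightarrow> b \<le> a \<Longrightarrow> SI g a b = 0"
  using integral_null[of a b g] by (simp add: SI_HK)

definition F0 :: "(real \<Rightarrow> complex) \<Rightarrow> real \<Rightarrow> complex" where
  "F0 g x = SI g 0 x - SI g x 0"

lemma F0_diff:
  assumes g: "locint g" and xy: "x \<le> y"
  shows "F0 g y - F0 g x = SI g x y"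
proof (cases "0 \<le> x")
  case True
  then show ?thesis unfolding F0_def using SI_split[OF g True xy] SI_empty[OF g, of 0 x] SI_empty[OF g, of 0 y] xy
    by simp
next
  case False
  show ?thesis
  proof (cases "0 \<le> y")
    case True
    then show ?thesis unfolding F0_def using SI_split[OF g _ True, of x] False SI_empty[OF g, of x 0] SI_empty[OF g, of 0 y] SI_empty[OF g, of 0 x]
      by simp
  next
    case False
    then have "y \<le> 0" by simp
    have "x \<le> 0" using \<open>\<not> 0 \<le> x\<close> by simp
    then show ?thesis unfolding F0_def using SI_split[OF g xy \<open>y \<le> 0\<close>] SI_empty[OF g \<open>x \<le> 0\<close>] SI_empty[OF g \<open>y \<le> 0\<close>]
      by simp
  qed
qed

lemma F0_cont:
  assumes g: "locint g"
  shows "continuous_on UNIV (F0 g)"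
proof (rule continuous_at_imp_continuous_on, intro ballI)
  fix x :: real
  have "continuous_on {x-1..x+1} (\<lambda>y. F0 g (x-1) + integral {x-1..y} g)"
    by (intro continuous_intros indefinite_integral_continuous_1 locint_HK[OF g])
  moreover have "F0 g y = F0 g (x-1) + integral {x-1..y} g" if "y \<in> {x-1..x+1}" for y
    using F0_diff[OF g, of "x-1" y] that SI_HK[OF g] by (auto simp: algebra_simps)
  ultimately have "continuous_on {x-1..x+1} (F0 g)"
    using continuous_on_cong by (metis (no_types, lifting))
  moreover have "x \<in> interior {x-1..x+1}" by simp
  ultimately show "isCont (F0 g) x"
    using continuous_on_interior by blast
qed

lemma test_fun_props:
  assumes "test_fun \<phi>"
  obtains R where "R > 0" "\<And>x. R \<le> \<bar>x\<bar> \<Longrightarrow> \<phi> x = 0" "\<And>x. R \<le> \<bar>x\<bar> \<Longrightarrow> deriv \<phi> x = 0"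
    "\<And>x. (\<phi> has_real_derivative deriv \<phi> x) (at x)" "continuous_on UNIV (deriv \<phi>)"
proof -
  from assms obtain R0 where R0: "\<And>x. \<bar>x\<bar> > R0 \<Longrightarrow> \<phi> x = 0"
    and diff: "\<And>x. \<phi> differentiable (at x)" and cont: "continuous_on UNIV (deriv \<phi>)"
    unfolding test_fun_def by blast
  define R where "R = \<bar>R0\<bar> + 1"
  have D: "(\<phi> has_real_derivative deriv \<phi> x) (at x)" for x
    using diff DERIV_deriv_iff_real_differentiable by blast
  have z: "\<phi> x = 0" if "R \<le> \<bar>x\<bar>" for x
  proof -
    have "\<bar>x\<bar> > R0" using that unfolding R_def by linarith
    then show ?thesis by (rule R0)
  qed
  have dz: "deriv \<phi> x = 0" if "R \<le> \<bar>x\<bar>" for x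
  proof -
    define S where "S = {..< -\<bar>R0\<bar>} \<union> {\<bar>R0\<bar> <..}"
    have oS: "open S" unfolding S_def by (intro open_Un open_lessThan open_greaterThan)
    have xS: "x \<in> S" using that unfolding S_def R_def by (cases "x < 0") auto
    have eq: "(\<lambda>_. 0) y = \<phi> y" if "y \<in> S" for y
    proof -
      have "\<bar>y\<bar> > R0" using that unfolding S_def by (cases "y < 0") auto
      then show ?thesis using R0 by simp
    qed
    have "((\<lambda>_. 0) has_real_derivative 0) (at x)" by simp
    then have "(\<phi> has_real_derivative 0) (at x)"
      by (rule has_field_derivative_transform_within_open[OF _ oS xS eq])
    then show ?thesis by (rule DERIV_imp_deriv)
  qed
  have R: "R > 0" unfolding R_def by simp
  show ?thesis
    by (rule that[of R, OF R z dz D cont])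
qed

lemma integral_of_real_ind:
  "(LINT x|lebesgue. indicator A x *\<^sub>R complex_of_real (f x)) = complex_of_real (LINT x|lebesgue. indicator A x *\<^sub>R f x)"
  by (subst integral_complex_of_real[symmetric]) (simp add: scaleR_conv_of_real)

lemma F0_weak:
  assumes g: "locint g" and \<phi>: "test_fun \<phi>"
  shows "integrable lebesgue (\<lambda>x. F0 g x * of_real (deriv \<phi> x))"
    and "(LINT x|lebesgue. F0 g x * of_real (deriv \<phi> x)) = - (LINT x|lebesgue. g x * of_real (\<phi> x))"
proof -
  obtain R where R: "R > 0" and z: "\<And>x. R \<le> \<bar>x\<bar> \<Longrightarrow> \<phi> x = 0" and dz: "\<And>x. R \<le> \<bar>x\<bar> \<Longrightarrow> deriv \<phi> x = 0"
    and D: "\<And>x. (\<phi> has_real_derivative deriv \<phi> x) (at x)" and cont: "continuous_on UNIV (deriv \<phi>)"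
    using test_fun_props[OF \<phi>] by blast
  let ?\<psi> = "\<lambda>x. complex_of_real (deriv \<phi> x)"
  have contF: "continuous_on UNIV (F0 g)" by (rule F0_cont[OF g])
  have cont\<psi>: "continuous_on UNIV ?\<psi>" using cont by (intro continuous_intros)
  show int1: "integrable lebesgue (\<lambda>x. F0 g x * of_real (deriv \<phi> x))"
  proof (rule cont_cs_integrable[where R=R])
    show "continuous_on UNIV (\<lambda>x. F0 g x * complex_of_real (deriv \<phi> x))"
      by (rule continuous_on_mult[OF contF cont\<psi>])
    fix x :: real assume "R \<le> \<bar>x\<bar>"
    then show "F0 g x * complex_of_real (deriv \<phi> x) = 0" using dz by simp
  qed
  have "(LINT x|lebesgue. F0 g x * ?\<psi> x)
      = (LINT x|lebesgue. indicator {-R..R} x *\<^sub>R (?\<psi> x * F0 g (-R)) + indicator {-R..R} x *\<^sub>R (?\<psi> x * SI g (-R) x))"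
  proof (rule Bochner_Integration.integral_cong[OF refl])
    fix x
    show "F0 g x * ?\<psi> x = indicator {-R..R} x *\<^sub>R (?\<psi> x * F0 g (-R)) + indicator {-R..R} x *\<^sub>R (?\<psi> x * SI g (-R) x)"
    proof (cases "x \<in> {-R..R}")
      case True
      then have "F0 g x = F0 g (-R) + SI g (-R) x" using F0_diff[OF g, of "-R" x] by (auto simp: algebra_simps)
      then show ?thesis using True by (simp add: algebra_simps)
    next
      case False
      then have "R \<le> \<bar>x\<bar>" by auto
      then show ?thesis using False dz by simp
    qed
  qed
  also have "\<dots> = (LINT x|lebesgue. indicator {-R..R} x *\<^sub>R (?\<psi> x * F0 g (-R))) + (LINT x|lebesgue. indicator {-R..R} x *\<^sub>R (?\<psi> x * SI g (-R) x))"
  proof (rule Bochner_Integration.integral_add)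
    show "integrable lebesgue (\<lambda>x. indicat_real {- R..R} x *\<^sub>R (?\<psi> x * F0 g (- R)))"
    proof -
      have "continuous_on {-R..R} (\<lambda>x. ?\<psi> x * F0 g (- R))"
        by (intro continuous_on_mult continuous_on_const continuous_on_subset[OF cont\<psi>]) auto
      then show ?thesis
        using absolutely_integrable_continuous_real[of "-R" R "\<lambda>x. ?\<psi> x * F0 g (- R)"]
        by (simp add: set_integrable_def)
    qed
    have "set_integrable lebesgue {-R..R} (\<lambda>x. ?\<psi> x * (F0 g x - F0 g (-R)))"
    proof -
      have "continuous_on {-R..R} (\<lambda>x. ?\<psi> x * (F0 g x - F0 g (-R)))"
        by (intro continuous_on_mult continuous_on_diff continuous_on_const continuous_on_subset[OF cont\<psi>] continuous_on_subset[OF contF]) auto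
      then show ?thesis
        using absolutely_integrable_continuous_real[of "-R" R "\<lambda>x. ?\<psi> x * (F0 g x - F0 g (-R))"] by simp
    qed
    moreover have "(\<lambda>x. indicat_real {- R..R} x *\<^sub>R (?\<psi> x * (F0 g x - F0 g (-R)))) = (\<lambda>x. indicat_real {- R..R} x *\<^sub>R (?\<psi> x * SI g (- R) x))"
      using F0_diff[OF g, of "-R"] by (auto simp: indicator_def)
    ultimately show "integrable lebesgue (\<lambda>x. indicat_real {- R..R} x *\<^sub>R (?\<psi> x * SI g (- R) x))"
      by (simp add: set_integrable_def)
  qed
  also have "(LINT x|lebesgue. indicator {-R..R} x *\<^sub>R (?\<psi> x * F0 g (-R))) = 0"
  proof -
    have "(LINT x|lebesgue. indicator {-R..R} x *\<^sub>R (?\<psi> x * F0 g (-R))) = (LINT x|lebesgue. indicator {-R..R} x *\<^sub>R ?\<psi> x) * F0 g (-R)"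
      by (subst integral_mult_left_zero[symmetric]) (simp add: algebra_simps)
    also have "(LINT x|lebesgue. indicator {-R..R} x *\<^sub>R ?\<psi> x) = of_real (\<phi> R - \<phi> (-R))"
      using FTC_leb[OF D cont, of "-R" R] R by (simp add: integral_of_real_ind)
    finally show ?thesis using z[of R] z[of "-R"] R by simp
  qed
  also have "(LINT x|lebesgue. indicator {-R..R} x *\<^sub>R (?\<psi> x * SI g (-R) x))
     = (LINT s|lebesgue. indicator {-R..R} s *\<^sub>R (g s * (LINT t|lebesgue. indicator {s..R} t *\<^sub>R ?\<psi> t)))"
    unfolding SI_def
  proof (rule FL')
    show "integrable lebesgue (\<lambda>x. indicat_real {- R..R} x *\<^sub>R ?\<psi> x)"
      using absolutely_integrable_continuous_real[of "-R" R ?\<psi>] cont\<psi>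
      by (auto simp: set_integrable_def intro: continuous_on_subset)
    show "integrable lebesgue (\<lambda>x. indicat_real {- R..R} x *\<^sub>R g x)"
      using g by (simp add: locint_def)
  qed
  also have "\<dots> = (LINT s|lebesgue. - (g s * of_real (\<phi> s)))"
  proof (rule Bochner_Integration.integral_cong[OF refl])
    fix s
    show "indicator {-R..R} s *\<^sub>R (g s * (LINT t|lebesgue. indicator {s..R} t *\<^sub>R ?\<psi> t)) = - (g s * of_real (\<phi> s))"
    proof (cases "s \<in> {-R..R}")
      case True
      have "(LINT t|lebesgue. indicator {s..R} t *\<^sub>R ?\<psi> t) = of_real (\<phi> R - \<phi> s)"
        using FTC_leb[OF D cont, of s R] True by (simp add: integral_of_real_ind)
      then show ?thesis using True z[of R] R by simp
    next
      case False
      then have "R \<le> \<bar>s\<bar>" by auto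
      then show ?thesis using False z by simp
    qed
  qed
  also have "\<dots> = - (LINT x|lebesgue. g x * of_real (\<phi> x))" by simp
  finally show "(LINT x|lebesgue. F0 g x * of_real (deriv \<phi> x)) = - (LINT x|lebesgue. g x * of_real (\<phi> x))"
    by simp
qed

lemma L2_locint: "L2 f \<Longrightarrow> locint f"
  unfolding locint_def using L2_loc by blast

lemma cont_locint: "continuous_on UNIV F \<Longrightarrow> locint F"
  unfolding locint_def
  using absolutely_integrable_continuous_real continuous_on_subset
  by (metis set_integrable_def subset_UNIV)

lemma R1:
  assumes H: "H1_with_deriv f f'"
  shows "\<exists>F. continuous_on UNIV F \<and> (AE x in lebesgue. f x = F x) \<and> (\<forall>x y. x \<le> y \<longrightarrow> F y - F x = SI f' x y)"
proof -
  have Lf: "L2 f" and Lf': "L2 f'" and wd: "weak_deriv f f'" using H by (auto simp: H1_with_deriv_def)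
  have g: "locint f'" using Lf' by (rule L2_locint)
  define h where "h x = f x - F0 f' x" for x
  have contF: "continuous_on UNIV (F0 f')" by (rule F0_cont[OF g])
  have loc: "integrable lebesgue (\<lambda>x. indicator {a..b} x *\<^sub>R h x)" for a b
  proof -
    have "integrable lebesgue (\<lambda>x. indicator {a..b} x *\<^sub>R f x - indicator {a..b} x *\<^sub>R F0 f' x)"
      using L2_loc[OF Lf] cont_locint[OF contF] unfolding locint_def by (intro Bochner_Integration.integrable_diff) auto
    then show ?thesis unfolding h_def by (simp add: algebra_simps)
  qed
  have hm: "h \<in> borel_measurable lebesgue"
    unfolding h_def using L2_meas[OF Lf] cont_leb_meas[OF contF] by measurable
  have wk: "(LINT x|lebesgue. h x * of_real (deriv \<phi> x)) = 0" if \<phi>: "test_fun \<phi>" for \<phi>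
  proof -
    have i1: "integrable lebesgue (\<lambda>x. f x * of_real (deriv \<phi> x))"
      and e1: "(LINT x|lebesgue. f x * of_real (deriv \<phi> x)) = - (LINT x|lebesgue. f' x * of_real (\<phi> x))"
      using wd \<phi> unfolding weak_deriv_def by blast+
    have "(LINT x|lebesgue. h x * of_real (deriv \<phi> x))
        = (LINT x|lebesgue. f x * of_real (deriv \<phi> x) - F0 f' x * of_real (deriv \<phi> x))"
      unfolding h_def by (simp add: algebra_simps)
    also have "\<dots> = (LINT x|lebesgue. f x * of_real (deriv \<phi> x)) - (LINT x|lebesgue. F0 f' x * of_real (deriv \<phi> x))"
      by (rule Bochner_Integration.integral_diff[OF i1 F0_weak(1)[OF g \<phi>]])
    also have "\<dots> = 0" using e1 F0_weak(2)[OF g \<phi>] by simp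
    finally show ?thesis .
  qed
  obtain C where C: "AE x in lebesgue. h x = C"
    using FunL[OF loc hm wk] by blast
  define F where "F x = F0 f' x + C" for x
  have "continuous_on UNIV F" unfolding F_def by (intro continuous_intros contF)
  moreover have "AE x in lebesgue. f x = F x" using C by eventually_elim (simp add: h_def F_def algebra_simps)
  moreover have "\<forall>x y. x \<le> y \<longrightarrow> F y - F x = SI f' x y"
    unfolding F_def using F0_diff[OF g] by simp
  ultimately show ?thesis by blast
qed

lemma locint_mult_cont:
  assumes g: "locint g" and F: "continuous_on UNIV F"
  shows "locint (\<lambda>t. g t * F t)"
  unfolding locint_def
proof (intro allI)
  fix a b :: real
  have "bounded (F ` {a..b})"
    by (intro compact_imp_bounded compact_continuous_image continuous_on_subset[OF F]) auto
  then obtain M where M: "M > 0" "\<And>x. x \<in> {a..b} \<Longrightarrow> norm (F x) \<le> M"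
    using bounded_pos by (metis imageI)
  have ig: "integrable lebesgue (\<lambda>x. indicator {a..b} x *\<^sub>R g x)" using g by (simp add: locint_def)
  show "integrable lebesgue (\<lambda>x. indicator {a..b} x *\<^sub>R (g x * F x))"
  proof (rule Bochner_Integration.integrable_bound[where f="\<lambda>x. M *\<^sub>R (indicator {a..b} x *\<^sub>R g x)"])
    show "integrable lebesgue (\<lambda>x. M *\<^sub>R (indicator {a..b} x *\<^sub>R g x))"
      using ig by (rule integrable_scaleR_right)
    have "(\<lambda>x. (indicator {a..b} x *\<^sub>R g x) * F x) \<in> borel_measurable lebesgue"
      using borel_measurable_integrable[OF ig] cont_leb_meas[OF F] by (rule borel_measurable_times)
    then show "(\<lambda>x. indicator {a..b} x *\<^sub>R (g x * F x)) \<in> borel_measurable lebesgue"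
      by simp
    show "AE x in lebesgue. norm (indicator {a..b} x *\<^sub>R (g x * F x)) \<le> norm (M *\<^sub>R (indicator {a..b} x *\<^sub>R g x))"
    proof (rule AE_I2)
      fix x
      show "norm (indicator {a..b} x *\<^sub>R (g x * F x)) \<le> norm (M *\<^sub>R (indicator {a..b} x *\<^sub>R g x))"
      proof (cases "x \<in> {a..b}")
        case True
        then have "norm (g x * F x) \<le> norm (g x) * M"
          using M(2)[OF True] by (simp add: norm_mult mult_left_mono)
        then show ?thesis using True M(1) by (simp add: mult.commute)
      qed simp
    qed
  qed
qed

lemma locint_add: "locint f \<Longrightarrow> locint g \<Longrightarrow> locint (\<lambda>x. f x + g x)"
  unfolding locint_def by (simp add: scaleR_add_right)

lemma SI_add: "locint f \<Longrightarrow> locint g \<Longrightarrow> SI (\<lambda>x. f x + g x) a b = SI f a b + SI g a b"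
  unfolding locint_def SI_def by (simp add: scaleR_add_right)

lemma R2:
  assumes f': "locint f'" and g': "locint g'"
    and Fc: "continuous_on UNIV F" and Fd: "\<And>x y. x \<le> y \<Longrightarrow> F y - F x = SI f' x y"
    and Gc: "continuous_on UNIV G" and Gd: "\<And>x y. x \<le> y \<Longrightarrow> G y - G x = SI g' x y"
    and ab: "a \<le> b"
  shows "SI (\<lambda>t. f' t * G t) a b + SI (\<lambda>t. F t * g' t) a b = F b * G b - F a * G a"
proof -
  have i1: "integrable lebesgue (\<lambda>x. indicator {a..b} x *\<^sub>R f' x)" using f' by (simp add: locint_def)
  have i2: "integrable lebesgue (\<lambda>x. indicator {a..b} x *\<^sub>R g' x)" using g' by (simp add: locint_def)
  have iA: "integrable lebesgue (\<lambda>x. indicator {a..b} x *\<^sub>R (f' x * SI g' a x))"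
  proof -
    have "locint (\<lambda>t. f' t * (G t - G a))"
      by (rule locint_mult_cont[OF f']) (intro continuous_intros Gc)
    then have "integrable lebesgue (\<lambda>x. indicator {a..b} x *\<^sub>R (f' x * (G x - G a)))"
      by (simp add: locint_def)
    moreover have "(\<lambda>x. indicator {a..b} x *\<^sub>R (f' x * (G x - G a))) = (\<lambda>x. indicator {a..b} x *\<^sub>R (f' x * SI g' a x))"
      using Gd by (auto simp: indicator_def)
    ultimately show ?thesis by simp
  qed
  have iB: "integrable lebesgue (\<lambda>x. indicator {a..b} x *\<^sub>R (g' x * SI f' x b))"
  proof -
    have "locint (\<lambda>t. g' t * (F b - F t))"
      by (rule locint_mult_cont[OF g']) (intro continuous_intros Fc)
    then have "integrable lebesgue (\<lambda>x. indicator {a..b} x *\<^sub>R (g' x * (F b - F x)))"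
      by (simp add: locint_def)
    moreover have "(\<lambda>x. indicator {a..b} x *\<^sub>R (g' x * (F b - F x))) = (\<lambda>x. indicator {a..b} x *\<^sub>R (g' x * SI f' x b))"
    proof
      fix x show "indicator {a..b} x *\<^sub>R (g' x * (F b - F x)) = indicator {a..b} x *\<^sub>R (g' x * SI f' x b)"
        using Fd[of x b] by (cases "x \<in> {a..b}") auto
    qed
    ultimately show ?thesis by simp
  qed
  have fl: "(LINT t|lebesgue. indicator {a..b} t *\<^sub>R (f' t * SI g' a t)) = (LINT s|lebesgue. indicator {a..b} s *\<^sub>R (g' s * SI f' s b))"
    unfolding SI_def by (rule FL'[OF i1 i2])
  have eA: "SI (\<lambda>t. f' t * G t) a b = G a * SI f' a b + (LINT t|lebesgue. indicator {a..b} t *\<^sub>R (f' t * SI g' a t))"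
  proof -
    have "SI (\<lambda>t. f' t * G t) a b = (LINT t|lebesgue. G a * (indicator {a..b} t *\<^sub>R f' t) + indicator {a..b} t *\<^sub>R (f' t * SI g' a t))"
      unfolding SI_def[of "\<lambda>t. f' t * G t" a b]
    proof (rule Bochner_Integration.integral_cong[OF refl])
      fix t show "indicator {a..b} t *\<^sub>R (f' t * G t) = G a * (indicator {a..b} t *\<^sub>R f' t) + indicator {a..b} t *\<^sub>R (f' t * SI g' a t)"
      proof (cases "t \<in> {a..b}")
        case True
        then have "G t = G a + SI g' a t" using Gd[of a t] by (simp add: algebra_simps)
        then show ?thesis using True by (simp add: algebra_simps)
      qed simp
    qed
    also have "\<dots> = (LINT t|lebesgue. G a * (indicator {a..b} t *\<^sub>R f' t)) + (LINT t|lebesgue. indicator {a..b} t *\<^sub>R (f' t * SI g' a t))"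
      by (rule Bochner_Integration.integral_add[OF Bochner_Integration.integrable_mult_right[OF i1] iA])
    also have "(LINT t|lebesgue. G a * (indicator {a..b} t *\<^sub>R f' t)) = G a * SI f' a b"
      unfolding SI_def by (rule integral_mult_right_zero)
    finally show ?thesis .
  qed
  have eB: "SI (\<lambda>t. F t * g' t) a b = F b * SI g' a b - (LINT s|lebesgue. indicator {a..b} s *\<^sub>R (g' s * SI f' s b))"
  proof -
    have "SI (\<lambda>t. F t * g' t) a b = (LINT t|lebesgue. F b * (indicator {a..b} t *\<^sub>R g' t) - indicator {a..b} t *\<^sub>R (g' t * SI f' t b))"
      unfolding SI_def[of "\<lambda>t. F t * g' t" a b]
    proof (rule Bochner_Integration.integral_cong[OF refl])
      fix t show "indicator {a..b} t *\<^sub>R (F t * g' t) = F b * (indicator {a..b} t *\<^sub>R g' t) - indicator {a..b} t *\<^sub>R (g' t * SI f' t b)"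
      proof (cases "t \<in> {a..b}")
        case True
        have Ft: "F t = F b - SI f' t b" using Fd[of t b] True by (simp add: algebra_simps)
        show ?thesis using True by (simp only: Ft) (simp add: algebra_simps)
      qed simp
    qed
    also have "\<dots> = (LINT t|lebesgue. F b * (indicator {a..b} t *\<^sub>R g' t)) - (LINT s|lebesgue. indicator {a..b} s *\<^sub>R (g' s * SI f' s b))"
      by (rule Bochner_Integration.integral_diff[OF Bochner_Integration.integrable_mult_right[OF i2] iB])
    also have "(LINT t|lebesgue. F b * (indicator {a..b} t *\<^sub>R g' t)) = F b * SI g' a b"
      unfolding SI_def by (rule integral_mult_right_zero)
    finally show ?thesis .
  qed
  show ?thesis
    using eA eB fl Fd[OF ab] Gd[OF ab] by (simp add: algebra_simps)
qed

lemma not_int_ray_top: "\<not> integrable lebesgue (indicator {B..} :: real \<Rightarrow> real)"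
proof
  assume int: "integrable lebesgue (indicator {B..} :: real \<Rightarrow> real)"
  define C where "C = (LINT x|lebesgue. (indicator {B..} x :: real))"
  have "real n \<le> C" for n
  proof -
    have "(LINT x|lebesgue. indicator {B..B + real n} x :: real) \<le> C"
      unfolding C_def by (rule integral_mono[OF ind_integrable int]) (auto simp: indicator_def)
    then show ?thesis using ind_int[of B "B + real n"] by simp
  qed
  then show False using reals_Archimedean2[of C] by (meson not_le)
qed

lemma not_int_ray_bot: "\<not> integrable lebesgue (indicator {..B} :: real \<Rightarrow> real)"
proof
  assume int: "integrable lebesgue (indicator {..B} :: real \<Rightarrow> real)"
  define C where "C = (LINT x|lebesgue. (indicator {..B} x :: real))"
  have "real n \<le> C" for n
  proof -
    have "(LINT x|lebesgue. indicator {B - real n..B} x :: real) \<le> C"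
      unfolding C_def by (rule integral_mono[OF ind_integrable int]) (auto simp: indicator_def)
    then show ?thesis using ind_int[of "B - real n" B] by simp
  qed
  then show False using reals_Archimedean2[of C] by (meson not_le)
qed

lemma LIM0_top:
  fixes W :: "real \<Rightarrow> complex"
  assumes W: "integrable lebesgue W" and lim: "(W \<longlongrightarrow> L) at_top"
  shows "L = 0"
proof (rule ccontr)
  assume L: "L \<noteq> 0"
  define e where "e = norm L / 2"
  have e: "e > 0" using L unfolding e_def by simp
  have "eventually (\<lambda>t. dist (W t) L < e) at_top" using lim e by (rule tendstoD)
  then obtain B where B: "\<And>t. t \<ge> B \<Longrightarrow> dist (W t) L < e" by (auto simp: eventually_at_top_linorder)
  have "integrable lebesgue (indicator {B..} :: real \<Rightarrow> real)"
  proof (rule Bochner_Integration.integrable_bound[where f="\<lambda>t. norm (W t) / e"])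
    show "integrable lebesgue (\<lambda>t. norm (W t) / e)" using W by simp
    show "(indicator {B..} :: real \<Rightarrow> real) \<in> borel_measurable lebesgue"
      by (intro borel_measurable_indicator) simp
    show "AE x in lebesgue. norm (indicator {B..} x :: real) \<le> norm (norm (W x) / e)"
    proof (rule AE_I2)
      fix t
      show "norm (indicator {B..} t :: real) \<le> norm (norm (W t) / e)"
      proof (cases "t \<ge> B")
        case True
        then have "norm (W t - L) < e" using B[OF True] by (simp add: dist_norm)
        then have "norm (W t) \<ge> e" using norm_triangle_ineq2[of L "W t"] unfolding e_def
          by (simp add: norm_minus_commute)
        then show ?thesis using True e by simp
      qed simp
    qed
  qed
  then show False using not_int_ray_top by blast
qed

lemma LIM0_bot:
  fixes W :: "real \<Rightarrow> complex"
  assumes W: "integrable lebesgue W" and lim: "(W \<longlongrightarrow> L) at_bot"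
  shows "L = 0"
proof (rule ccontr)
  assume L: "L \<noteq> 0"
  define e where "e = norm L / 2"
  have e: "e > 0" using L unfolding e_def by simp
  have "eventually (\<lambda>t. dist (W t) L < e) at_bot" using lim e by (rule tendstoD)
  then obtain B where B: "\<And>t. t \<le> B \<Longrightarrow> dist (W t) L < e" by (auto simp: eventually_at_bot_linorder)
  have "integrable lebesgue (indicator {..B} :: real \<Rightarrow> real)"
  proof (rule Bochner_Integration.integrable_bound[where f="\<lambda>t. norm (W t) / e"])
    show "integrable lebesgue (\<lambda>t. norm (W t) / e)" using W by simp
    show "(indicator {..B} :: real \<Rightarrow> real) \<in> borel_measurable lebesgue"
      by (intro borel_measurable_indicator) simp
    show "AE x in lebesgue. norm (indicator {..B} x :: real) \<le> norm (norm (W x) / e)"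
    proof (rule AE_I2)
      fix t
      show "norm (indicator {..B} t :: real) \<le> norm (norm (W t) / e)"
      proof (cases "t \<le> B")
        case True
        then have "norm (W t - L) < e" using B[OF True] by (simp add: dist_norm)
        then have "norm (W t) \<ge> e" using norm_triangle_ineq2[of L "W t"] unfolding e_def
          by (simp add: norm_minus_commute)
        then show ?thesis using True e by simp
      qed simp
    qed
  qed
  then show False using not_int_ray_bot by blast
qed

lemma SI_lim_top:
  assumes w: "integrable lebesgue w"
  shows "((\<lambda>t. SI w 0 t) \<longlongrightarrow> (LINT x|lebesgue. indicator {0..} x *\<^sub>R w x)) at_top"
proof (rule tendsto_at_topI_sequentially)
  fix X :: "nat \<Rightarrow> real" assume X: "filterlim X at_top sequentially"
  show "(\<lambda>n. SI w 0 (X n)) \<longlonglongrightarrow> (LINT x|lebesgue. indicator {0..} x *\<^sub>R w x)"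
    unfolding SI_def
  proof (rule integral_dominated_convergence[where w="\<lambda>x. norm (w x)"])
    show "(\<lambda>x. indicat_real {0..} x *\<^sub>R w x) \<in> borel_measurable lebesgue"
      using borel_measurable_integrable[OF w] by (intro borel_measurable_scaleR borel_measurable_indicator) auto
    show "\<And>i. (\<lambda>x. indicat_real {0..X i} x *\<^sub>R w x) \<in> borel_measurable lebesgue"
      using borel_measurable_integrable[OF w] by (intro borel_measurable_scaleR borel_measurable_indicator) auto
    show "integrable lebesgue (\<lambda>x. norm (w x))" using w by simp
    show "AE x in lebesgue. (\<lambda>i. indicat_real {0..X i} x *\<^sub>R w x) \<longlonglongrightarrow> indicat_real {0..} x *\<^sub>R w x"
    proof (rule AE_I2)
      fix x
      show "(\<lambda>i. indicat_real {0..X i} x *\<^sub>R w x) \<longlonglongrightarrow> indicat_real {0..} x *\<^sub>R w x"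
      proof (rule tendsto_eventually)
        have "eventually (\<lambda>i. X i \<ge> x) sequentially"
          using X by (simp add: filterlim_at_top)
        then show "eventually (\<lambda>i. indicat_real {0..X i} x *\<^sub>R w x = indicat_real {0..} x *\<^sub>R w x) sequentially"
          by eventually_elim (auto simp: indicator_def)
      qed
    qed
    fix i show "AE x in lebesgue. norm (indicat_real {0..X i} x *\<^sub>R w x) \<le> norm (w x)"
      by (intro AE_I2) (auto simp: indicator_def)
  qed
qed

lemma SI_lim_bot:
  assumes w: "integrable lebesgue w"
  shows "((\<lambda>t. SI w t 0) \<longlongrightarrow> (LINT x|lebesgue. indicator {..0} x *\<^sub>R w x)) at_bot"
proof (rule tendsto_at_botI_sequentially)
  fix X :: "nat \<Rightarrow> real" assume X: "filterlim X at_bot sequentially"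
  show "(\<lambda>n. SI w (X n) 0) \<longlonglongrightarrow> (LINT x|lebesgue. indicator {..0} x *\<^sub>R w x)"
    unfolding SI_def
  proof (rule integral_dominated_convergence[where w="\<lambda>x. norm (w x)"])
    show "(\<lambda>x. indicat_real {..0} x *\<^sub>R w x) \<in> borel_measurable lebesgue"
      using borel_measurable_integrable[OF w] by (intro borel_measurable_scaleR borel_measurable_indicator) auto
    show "\<And>i. (\<lambda>x. indicat_real {X i..0} x *\<^sub>R w x) \<in> borel_measurable lebesgue"
      using borel_measurable_integrable[OF w] by (intro borel_measurable_scaleR borel_measurable_indicator) auto
    show "integrable lebesgue (\<lambda>x. norm (w x))" using w by simp
    show "AE x in lebesgue. (\<lambda>i. indicat_real {X i..0} x *\<^sub>R w x) \<longlonglongrightarrow> indicat_real {..0} x *\<^sub>R w x"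
    proof (rule AE_I2)
      fix x
      show "(\<lambda>i. indicat_real {X i..0} x *\<^sub>R w x) \<longlonglongrightarrow> indicat_real {..0} x *\<^sub>R w x"
      proof (rule tendsto_eventually)
        have "eventually (\<lambda>i. X i \<le> x) sequentially"
          using X by (simp add: filterlim_at_bot)
        then show "eventually (\<lambda>i. indicat_real {X i..0} x *\<^sub>R w x = indicat_real {..0} x *\<^sub>R w x) sequentially"
          by eventually_elim (auto simp: indicator_def)
      qed
    qed
    fix i show "AE x in lebesgue. norm (indicat_real {X i..0} x *\<^sub>R w x) \<le> norm (w x)"
      by (intro AE_I2) (auto simp: indicator_def)
  qed
qed

lemma SI_lim_full:
  assumes w: "integrable lebesgue w"
  shows "(\<lambda>n. SI w (- real n) (real n)) \<longlonglongrightarrow> (LINT x|lebesgue. w x)"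
  unfolding SI_def
proof (rule integral_dominated_convergence[where w="\<lambda>x. norm (w x)"])
  show "w \<in> borel_measurable lebesgue" using w by simp
  show "\<And>i. (\<lambda>x. indicat_real {- real i..real i} x *\<^sub>R w x) \<in> borel_measurable lebesgue"
    using borel_measurable_integrable[OF w] by (intro borel_measurable_scaleR borel_measurable_indicator) auto
  show "integrable lebesgue (\<lambda>x. norm (w x))" using w by simp
  show "AE x in lebesgue. (\<lambda>i. indicat_real {- real i..real i} x *\<^sub>R w x) \<longlonglongrightarrow> w x"
  proof (rule AE_I2)
    fix x
    show "(\<lambda>i. indicat_real {- real i..real i} x *\<^sub>R w x) \<longlonglongrightarrow> w x"
    proof (rule tendsto_eventually)
      obtain N :: nat where N: "\<bar>x\<bar> \<le> real N" using real_arch_simple by blast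
      show "eventually (\<lambda>i. indicat_real {- real i..real i} x *\<^sub>R w x = w x) sequentially"
        unfolding eventually_sequentially
        by (rule exI[of _ N]) (use N in \<open>auto simp: indicator_def\<close>)
    qed
  qed
  fix i show "AE x in lebesgue. norm (indicat_real {- real i..real i} x *\<^sub>R w x) \<le> norm (w x)"
    by (intro AE_I2) (auto simp: indicator_def)
qed

lemma IBP:
  assumes Hf: "H1_with_deriv f f'" and Hg: "H1_with_deriv g g'"
  shows "(LINT x|lebesgue. f' x * g x + f x * g' x) = 0"
proof -
  have Lf: "L2 f" and Lf': "L2 f'" using Hf by (auto simp: H1_with_deriv_def)
  have Lg: "L2 g" and Lg': "L2 g'" using Hg by (auto simp: H1_with_deriv_def)
  obtain F where Fc: "continuous_on UNIV F" and AEf: "AE x in lebesgue. f x = F x"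
    and Fd: "\<And>x y. x \<le> y \<Longrightarrow> F y - F x = SI f' x y"
    using R1[OF Hf] by blast
  obtain G where Gc: "continuous_on UNIV G" and AEg: "AE x in lebesgue. g x = G x"
    and Gd: "\<And>x y. x \<le> y \<Longrightarrow> G y - G x = SI g' x y"
    using R1[OF Hg] by blast
  have f'l: "locint f'" and g'l: "locint g'" using Lf' Lg' by (auto intro: L2_locint)
  define w where "w t = f' t * G t + F t * g' t" for t
  define W where "W t = F t * G t" for t
  have Fm: "F \<in> borel_measurable lebesgue" and Gm: "G \<in> borel_measurable lebesgue"
    using Fc Gc by (auto intro: cont_leb_meas)
  have f'm: "f' \<in> borel_measurable lebesgue" and g'm: "g' \<in> borel_measurable lebesgue"
    and fm: "f \<in> borel_measurable lebesgue" and gm: "g \<in> borel_measurable lebesgue"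
    using Lf Lf' Lg Lg' by (auto intro: L2_meas)
  have wm: "w \<in> borel_measurable lebesgue" unfolding w_def using Fm Gm f'm g'm by measurable
  have Wm: "W \<in> borel_measurable lebesgue" unfolding W_def using Fm Gm by measurable
  have AEw: "AE x in lebesgue. f' x * g x + f x * g' x = w x"
    using AEf AEg by eventually_elim (simp add: w_def)
  have AEW: "AE x in lebesgue. f x * g x = W x"
    using AEf AEg by eventually_elim (simp add: W_def)
  have int0: "integrable lebesgue (\<lambda>x. f' x * g x + f x * g' x)"
    using L2_prod[OF Lf' Lg] L2_prod[OF Lf Lg'] by (rule Bochner_Integration.integrable_add)
  have m0: "(\<lambda>x. f' x * g x + f x * g' x) \<in> borel_measurable lebesgue"
    using f'm g'm fm gm by measurable
  have intw: "integrable lebesgue w"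
    using int0 integrable_cong_AE[OF m0 wm AEw] by simp
  have eqint: "(LINT x|lebesgue. f' x * g x + f x * g' x) = (LINT x|lebesgue. w x)"
    by (rule integral_cong_AE[OF m0 wm AEw])
  have mfg: "(\<lambda>x. f x * g x) \<in> borel_measurable lebesgue" using fm gm by measurable
  have intW: "integrable lebesgue W"
    using L2_prod[OF Lf Lg] integrable_cong_AE[OF mfg Wm AEW] by simp
  have l1: "locint (\<lambda>t. f' t * G t)" by (rule locint_mult_cont[OF f'l Gc])
  have l2: "locint (\<lambda>t. F t * g' t)"
    using locint_mult_cont[OF g'l Fc] by (simp add: mult.commute)
  have Wd: "W b - W a = SI w a b" if "a \<le> b" for a b
  proof -
    have "SI w a b = SI (\<lambda>t. f' t * G t) a b + SI (\<lambda>t. F t * g' t) a b"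
      unfolding w_def by (rule SI_add[OF l1 l2])
    also have "\<dots> = F b * G b - F a * G a"
      by (rule R2[OF f'l g'l Fc Fd Gc Gd that])
    finally show ?thesis unfolding W_def by simp
  qed
  have top: "(W \<longlongrightarrow> 0) at_top"
  proof -
    have "((\<lambda>t. W 0 + SI w 0 t) \<longlongrightarrow> W 0 + (LINT x|lebesgue. indicator {0..} x *\<^sub>R w x)) at_top"
      by (intro tendsto_intros SI_lim_top[OF intw])
    moreover have "eventually (\<lambda>t. W 0 + SI w 0 t = W t) at_top"
      unfolding eventually_at_top_linorder
    proof (rule exI[of _ 0], intro allI impI)
      fix t :: real assume "0 \<le> t"
      then have "W t - W 0 = SI w 0 t" by (rule Wd)
      then have "SI w 0 t = W t - W 0" by simp
      then show "W 0 + SI w 0 t = W t" by simp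
    qed
    ultimately have "(W \<longlongrightarrow> W 0 + (LINT x|lebesgue. indicator {0..} x *\<^sub>R w x)) at_top"
      by (rule Lim_transform_eventually)
    moreover then have "W 0 + (LINT x|lebesgue. indicator {0..} x *\<^sub>R w x) = 0"
      by (rule LIM0_top[OF intW])
    ultimately show ?thesis by simp
  qed
  have bot: "(W \<longlongrightarrow> 0) at_bot"
  proof -
    have "((\<lambda>t. W 0 - SI w t 0) \<longlongrightarrow> W 0 - (LINT x|lebesgue. indicator {..0} x *\<^sub>R w x)) at_bot"
      by (intro tendsto_intros SI_lim_bot[OF intw])
    moreover have "eventually (\<lambda>t. W 0 - SI w t 0 = W t) at_bot"
      unfolding eventually_at_bot_linorder
    proof (rule exI[of _ 0], intro allI impI)
      fix t :: real assume "t \<le> 0"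
      then have "W 0 - W t = SI w t 0" by (rule Wd)
      then have "SI w t 0 = W 0 - W t" by simp
      then show "W 0 - SI w t 0 = W t" by simp
    qed
    ultimately have "(W \<longlongrightarrow> W 0 - (LINT x|lebesgue. indicator {..0} x *\<^sub>R w x)) at_bot"
      by (rule Lim_transform_eventually)
    moreover then have "W 0 - (LINT x|lebesgue. indicator {..0} x *\<^sub>R w x) = 0"
      by (rule LIM0_bot[OF intW])
    ultimately show ?thesis by simp
  qed
  have s1: "(\<lambda>n. W (real n)) \<longlonglongrightarrow> 0"
    by (rule filterlim_compose[OF top filterlim_real_sequentially])
  have "filterlim (\<lambda>n. - real n) at_bot sequentially"
    by (rule filterlim_compose[OF filterlim_uminus_at_bot_at_top filterlim_real_sequentially])
  then have s2: "(\<lambda>n. W (- real n)) \<longlonglongrightarrow> 0"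
    by (rule filterlim_compose[OF bot])
  have "(\<lambda>n. SI w (- real n) (real n)) \<longlonglongrightarrow> 0 - 0"
  proof -
    have "(\<lambda>n. W (real n) - W (- real n)) \<longlonglongrightarrow> 0 - 0" by (intro tendsto_intros s1 s2)
    moreover have "W (real n) - W (- real n) = SI w (- real n) (real n)" for n by (rule Wd) simp
    ultimately show ?thesis by simp
  qed
  then have "(LINT x|lebesgue. w x) = 0 - 0"
    using SI_lim_full[OF intw] LIMSEQ_unique by blast
  then show ?thesis using eqint by simp
qed

lemma pt:
  fixes p1 p2 q1 q2 :: complex and a b l :: real
  assumes e1: "- of_real a * p1 + \<i> * q2 = of_real l * p1" and e2: "\<i> * q1 - of_real b * p2 = of_real l * p2"
  shows "cnj q1 * p2 + cnj p1 * q2 = \<i> * of_real ((b + l) * (cmod p2)^2 - (a + l) * (cmod p1)^2)"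
proof -
  have q2: "q2 = - \<i> * of_real (a + l) * p1"
  proof -
    have "\<i> * q2 = of_real (a + l) * p1" using e1 by (simp add: algebra_simps)
    then have "- \<i> * (\<i> * q2) = - \<i> * (of_real (a + l) * p1)" by simp
    then show ?thesis by (simp add: algebra_simps)
  qed
  have q1: "q1 = - \<i> * of_real (b + l) * p2"
  proof -
    have "\<i> * q1 = of_real (b + l) * p2" using e2 by (simp add: algebra_simps)
    then have "- \<i> * (\<i> * q1) = - \<i> * (of_real (b + l) * p2)" by simp
    then show ?thesis by (simp add: algebra_simps)
  qed
  have n1: "cnj p1 * p1 = of_real ((cmod p1)^2)" by (metis complex_norm_square mult.commute)
  have n2: "cnj p2 * p2 = of_real ((cmod p2)^2)" by (metis complex_norm_square mult.commute)
  have "cnj q1 * p2 + cnj p1 * q2 = \<i> * of_real (b + l) * (cnj p2 * p2) - \<i> * of_real (a + l) * (cnj p1 * p1)"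
    unfolding q1 q2 by (simp add: algebra_simps)
  also have "\<dots> = \<i> * of_real ((b + l) * (cmod p2)^2 - (a + l) * (cmod p1)^2)"
    unfolding n1 n2 by (simp add: algebra_simps)
  finally show ?thesis .
qed

lemma H1_cnj:
  assumes "H1_with_deriv f f'"
  shows "H1_with_deriv (\<lambda>x. cnj (f x)) (\<lambda>x. cnj (f' x))"
proof -
  have Lf: "L2 f" and Lf': "L2 f'" and wd: "weak_deriv f f'" using assms by (auto simp: H1_with_deriv_def)
  have cm: "cnj \<in> borel_measurable borel"
    by (intro borel_measurable_continuous_onI continuous_on_cnj continuous_on_id)
  have L2c: "L2 (\<lambda>x. cnj (h x))" if "L2 h" for h
    using that measurable_compose[OF _ cm] unfolding L2_def by auto
  have "weak_deriv (\<lambda>x. cnj (f x)) (\<lambda>x. cnj (f' x))"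
    unfolding weak_deriv_def
  proof (intro allI impI conjI)
    fix \<phi> assume \<phi>: "test_fun \<phi>"
    have i1: "integrable lebesgue (\<lambda>x. f x * of_real (deriv \<phi> x))"
      and i2: "integrable lebesgue (\<lambda>x. f' x * of_real (\<phi> x))"
      and e: "(LINT x|lebesgue. f x * of_real (deriv \<phi> x)) = - (LINT x|lebesgue. f' x * of_real (\<phi> x))"
      using wd \<phi> unfolding weak_deriv_def by blast+
    have c1: "(\<lambda>x. cnj (f x) * of_real (deriv \<phi> x)) = (\<lambda>x. cnj (f x * of_real (deriv \<phi> x)))" by simp
    have c2: "(\<lambda>x. cnj (f' x) * of_real (\<phi> x)) = (\<lambda>x. cnj (f' x * of_real (\<phi> x)))" by simp
    show "integrable lebesgue (\<lambda>x. cnj (f x) * of_real (deriv \<phi> x))"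
      unfolding c1 using i1 by (simp only: complex_integrable_cnj)
    show "integrable lebesgue (\<lambda>x. cnj (f' x) * of_real (\<phi> x))"
      unfolding c2 using i2 by (simp only: complex_integrable_cnj)
    show "(LINT x|lebesgue. cnj (f x) * of_real (deriv \<phi> x)) = - (LINT x|lebesgue. cnj (f' x) * of_real (\<phi> x))"
    proof -
      have a1: "(LINT x|lebesgue. cnj (f x) * of_real (deriv \<phi> x)) = cnj (LINT x|lebesgue. f x * of_real (deriv \<phi> x))"
        using Bochner_Integration.integral_cnj[of lebesgue "\<lambda>x. f x * of_real (deriv \<phi> x)"] by simp
      have a2: "(LINT x|lebesgue. cnj (f' x) * of_real (\<phi> x)) = cnj (LINT x|lebesgue. f' x * of_real (\<phi> x))"
        using Bochner_Integration.integral_cnj[of lebesgue "\<lambda>x. f' x * of_real (\<phi> x)"] by simp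
      show ?thesis unfolding a1 a2 e by simp
    qed
  qed
  then show ?thesis using L2c[OF Lf] L2c[OF Lf'] by (simp add: H1_with_deriv_def)
qed

lemma bounded_weight_integrable:
  fixes u :: "real \<Rightarrow> real" and n :: "real \<Rightarrow> real"
  assumes um: "u \<in> borel_measurable lebesgue" and M: "AE x in lebesgue. \<bar>u x\<bar> \<le> M"
    and n: "integrable lebesgue n" and nn: "\<And>x. n x \<ge> 0"
  shows "integrable lebesgue (\<lambda>x. (u x + l) * n x)"
proof (rule Bochner_Integration.integrable_bound[where f="\<lambda>x. (\<bar>M\<bar> + \<bar>l\<bar>) * n x"])
  show "integrable lebesgue (\<lambda>x. (\<bar>M\<bar> + \<bar>l\<bar>) * n x)" using n by simp
  show "(\<lambda>x. (u x + l) * n x) \<in> borel_measurable lebesgue" using um borel_measurable_integrable[OF n] by measurable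
  show "AE x in lebesgue. norm ((u x + l) * n x) \<le> norm ((\<bar>M\<bar> + \<bar>l\<bar>) * n x)"
    using M
  proof eventually_elim
    case (elim x)
    have "\<bar>u x + l\<bar> \<le> \<bar>M\<bar> + \<bar>l\<bar>" using elim by linarith
    then show ?case using nn[of x] by (simp add: abs_mult mult_right_mono)
  qed
qed

theorem theorem2p3:
  fixes um up :: "real \<Rightarrow> real" and lam :: real
  assumes "Linf um" and "Linf up"
    and "is_eigenvalue um up (complex_of_real lam)"
  shows "(\<forall>c::real.
            ereal (c - lam) \<le> Linf_norm (pos_part (\<lambda>x. um x + c))
          \<or> ereal (c + lam) \<le> Linf_norm (neg_part (\<lambda>x. up x - c)))
       \<and> (\<forall>c::real. c > 0 \<longrightarrow> (AE x in lebesgue. up x \<ge> c) \<longrightarrow> (AE x in lebesgue. - um x \<ge> c)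
            \<longrightarrow> \<not> (- c < lam \<and> lam < c))"
proof -
  obtain \<psi>1 \<psi>2 \<psi>1' \<psi>2' where H1: "H1_with_deriv \<psi>1 \<psi>1'" and H2: "H1_with_deriv \<psi>2 \<psi>2'"
    and nz: "\<not> (AE x in lebesgue. \<psi>1 x = 0 \<and> \<psi>2 x = 0)"
    and eq: "AE x in lebesgue.
           - of_real (um x) * \<psi>1 x + \<i> * \<psi>2' x = of_real lam * \<psi>1 x \<and>
           \<i> * \<psi>1' x - of_real (up x) * \<psi>2 x = of_real lam * \<psi>2 x"
    using assms(3) unfolding is_eigenvalue_def by blast
  obtain Mm where umm[measurable]: "um \<in> borel_measurable lebesgue" and Mm: "AE x in lebesgue. \<bar>um x\<bar> \<le> Mm"
    using assms(1) unfolding Linf_def by blast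
  obtain Mp where upm[measurable]: "up \<in> borel_measurable lebesgue" and Mp: "AE x in lebesgue. \<bar>up x\<bar> \<le> Mp"
    using assms(2) unfolding Linf_def by blast
  have L1: "L2 \<psi>1" "L2 \<psi>1'" and L2': "L2 \<psi>2" "L2 \<psi>2'" using H1 H2 by (auto simp: H1_with_deriv_def)
  have m1[measurable]: "\<psi>1 \<in> borel_measurable lebesgue" "\<psi>1' \<in> borel_measurable lebesgue"
    and m2[measurable]: "\<psi>2 \<in> borel_measurable lebesgue" "\<psi>2' \<in> borel_measurable lebesgue"
    using L1 L2' by (auto intro: L2_meas)
  define n1 where "n1 x = (cmod (\<psi>1 x))^2" for x
  define n2 where "n2 x = (cmod (\<psi>2 x))^2" for x
  have in1: "integrable lebesgue n1" and in2: "integrable lebesgue n2"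
    using L1 L2' unfolding L2_def n1_def n2_def by auto
  have nn1: "n1 x \<ge> 0" and nn2: "n2 x \<ge> 0" for x unfolding n1_def n2_def by auto
  have ia: "integrable lebesgue (\<lambda>x. (um x + lam) * n1 x)"
    by (rule bounded_weight_integrable[OF umm Mm in1 nn1])
  have ib: "integrable lebesgue (\<lambda>x. (up x + lam) * n2 x)"
    by (rule bounded_weight_integrable[OF upm Mp in2 nn2])
  have key: "(LINT x|lebesgue. (up x + lam) * n2 x) = (LINT x|lebesgue. (um x + lam) * n1 x)"
  proof -
    have I0: "(LINT x|lebesgue. cnj (\<psi>1' x) * \<psi>2 x + cnj (\<psi>1 x) * \<psi>2' x) = 0"
      by (rule IBP[OF H1_cnj[OF H1] H2])
    have ae: "AE x in lebesgue. cnj (\<psi>1' x) * \<psi>2 x + cnj (\<psi>1 x) * \<psi>2' x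
        = \<i> * of_real ((up x + lam) * n2 x - (um x + lam) * n1 x)"
      using eq by eventually_elim (unfold n1_def n2_def, rule pt, auto)
    have "(LINT x|lebesgue. cnj (\<psi>1' x) * \<psi>2 x + cnj (\<psi>1 x) * \<psi>2' x)
        = (LINT x|lebesgue. \<i> * of_real ((up x + lam) * n2 x - (um x + lam) * n1 x))"
    proof (rule integral_cong_AE)
      have cm: "cnj \<in> borel_measurable borel"
        by (intro borel_measurable_continuous_onI continuous_on_cnj continuous_on_id)
      have c1: "(\<lambda>x. cnj (\<psi>1' x)) \<in> borel_measurable lebesgue" by (rule measurable_compose[OF m1(2) cm])
      have c2: "(\<lambda>x. cnj (\<psi>1 x)) \<in> borel_measurable lebesgue" by (rule measurable_compose[OF m1(1) cm])
      show "(\<lambda>x. cnj (\<psi>1' x) * \<psi>2 x + cnj (\<psi>1 x) * \<psi>2' x) \<in> borel_measurable lebesgue"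
        using c1 c2 m2 by (intro borel_measurable_add borel_measurable_times) auto
      have Rm: "(\<lambda>x. (up x + lam) * n2 x - (um x + lam) * n1 x) \<in> borel_measurable lebesgue"
        using ia ib by (intro borel_measurable_diff borel_measurable_integrable)
      show "(\<lambda>x. \<i> * complex_of_real ((up x + lam) * n2 x - (um x + lam) * n1 x)) \<in> borel_measurable lebesgue"
      proof -
        have ofm: "(\<lambda>x::real. complex_of_real x) \<in> borel_measurable borel"
          by (intro borel_measurable_continuous_onI continuous_intros)
        show ?thesis
          by (rule borel_measurable_times[OF borel_measurable_const measurable_compose[OF Rm ofm]])
      qed
      show "AE x in lebesgue. cnj (\<psi>1' x) * \<psi>2 x + cnj (\<psi>1 x) * \<psi>2' x
        = \<i> * of_real ((up x + lam) * n2 x - (um x + lam) * n1 x)" by (rule ae)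
    qed
    also have "\<dots> = \<i> * (LINT x|lebesgue. of_real ((up x + lam) * n2 x - (um x + lam) * n1 x))"
      by (rule integral_mult_right_zero)
    also have "(LINT x|lebesgue. of_real ((up x + lam) * n2 x - (um x + lam) * n1 x))
       = complex_of_real (LINT x|lebesgue. (up x + lam) * n2 x - (um x + lam) * n1 x)"
      by (rule integral_complex_of_real)
    also have "(LINT x|lebesgue. (up x + lam) * n2 x - (um x + lam) * n1 x)
        = (LINT x|lebesgue. (up x + lam) * n2 x) - (LINT x|lebesgue. (um x + lam) * n1 x)"
      by (rule Bochner_Integration.integral_diff[OF ib ia])
    finally show ?thesis using I0 by simp
  qed
  have part1: "ereal (c - lam) \<le> Linf_norm (pos_part (\<lambda>x. um x + c))
          \<or> ereal (c + lam) \<le> Linf_norm (neg_part (\<lambda>x. up x - c))" for c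
  proof (rule ccontr)
    assume "\<not> ?thesis"
    then have A: "Linf_norm (pos_part (\<lambda>x. um x + c)) < ereal (c - lam)"
      and B: "Linf_norm (neg_part (\<lambda>x. up x - c)) < ereal (c + lam)" by auto
    obtain r1 where r1: "Linf_norm (pos_part (\<lambda>x. um x + c)) < ereal r1" "r1 < c - lam"
      using ereal_dense2[OF A] by (auto)
    obtain r2 where r2: "Linf_norm (neg_part (\<lambda>x. up x - c)) < ereal r2" "r2 < c + lam"
      using ereal_dense2[OF B] by (auto)
    have AE1: "AE x in lebesgue. um x + lam \<le> r1 - c + lam"
      using esssup_AE[of "\<lambda>x. ereal \<bar>pos_part (\<lambda>x. um x + c) x\<bar>" lebesgue]
    proof eventually_elim
      case (elim x)
      then have "ereal \<bar>pos_part (\<lambda>x. um x + c) x\<bar> < ereal r1"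
        using r1(1) unfolding Linf_norm_def by (meson le_less_trans)
      then show ?case unfolding pos_part_def by auto
    qed
    have AE2: "AE x in lebesgue. up x + lam \<ge> c + lam - r2"
      using esssup_AE[of "\<lambda>x. ereal \<bar>neg_part (\<lambda>x. up x - c) x\<bar>" lebesgue]
    proof eventually_elim
      case (elim x)
      then have "ereal \<bar>neg_part (\<lambda>x. up x - c) x\<bar> < ereal r2"
        using r2(1) unfolding Linf_norm_def by (meson le_less_trans)
      then show ?case unfolding neg_part_def by auto
    qed
    define \<alpha> where "\<alpha> = c - lam - r1"
    define \<beta> where "\<beta> = c + lam - r2"
    have \<alpha>: "\<alpha> > 0" and \<beta>: "\<beta> > 0" using r1 r2 unfolding \<alpha>_def \<beta>_def by auto
    define N1 where "N1 = (LINT x|lebesgue. n1 x)"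
    define N2 where "N2 = (LINT x|lebesgue. n2 x)"
    have N1: "N1 \<ge> 0" and N2: "N2 \<ge> 0" unfolding N1_def N2_def using nn1 nn2 by auto
    have P: "(LINT x|lebesgue. (um x + lam) * n1 x) \<le> (LINT x|lebesgue. (- \<alpha>) * n1 x)"
    proof (rule integral_mono_AE[OF ia])
      show "integrable lebesgue (\<lambda>x. (- \<alpha>) * n1 x)" using in1 by simp
      show "AE x in lebesgue. (um x + lam) * n1 x \<le> (- \<alpha>) * n1 x"
        using AE1 by eventually_elim (use nn1 in \<open>auto simp: \<alpha>_def intro!: mult_right_mono\<close>)
    qed
    have Q: "(LINT x|lebesgue. \<beta> * n2 x) \<le> (LINT x|lebesgue. (up x + lam) * n2 x)"
    proof (rule integral_mono_AE[OF _ ib])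
      show "integrable lebesgue (\<lambda>x. \<beta> * n2 x)" using in2 by simp
      show "AE x in lebesgue. \<beta> * n2 x \<le> (up x + lam) * n2 x"
        using AE2 by eventually_elim (use nn2 in \<open>auto simp: \<beta>_def intro!: mult_right_mono\<close>)
    qed
    have "\<beta> * N2 \<le> - \<alpha> * N1" using P Q key unfolding N1_def N2_def by simp
    moreover have "\<beta> * N2 \<ge> 0" "\<alpha> * N1 \<ge> 0" using \<alpha> \<beta> N1 N2 by auto
    ultimately have "\<alpha> * N1 = 0" "\<beta> * N2 = 0" by linarith+
    then have "N1 = 0" "N2 = 0" using \<alpha> \<beta> by auto
    then have "AE x in lebesgue. n1 x = 0" "AE x in lebesgue. n2 x = 0"
      unfolding N1_def N2_def
      using integral_nonneg_eq_0_iff_AE[OF in1] integral_nonneg_eq_0_iff_AE[OF in2] nn1 nn2 by auto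
    then have "AE x in lebesgue. \<psi>1 x = 0 \<and> \<psi>2 x = 0"
      by eventually_elim (simp add: n1_def n2_def)
    then show False using nz by blast
  qed
  have part2: "\<not> (- c < lam \<and> lam < c)"
    if c: "c > 0" and upc: "AE x in lebesgue. up x \<ge> c" and umc: "AE x in lebesgue. - um x \<ge> c" for c
  proof
    assume lc: "- c < lam \<and> lam < c"
    have z1: "Linf_norm (pos_part (\<lambda>x. um x + c)) \<le> 0"
      unfolding Linf_norm_def
    proof (rule esssup_I)
      show "(\<lambda>x. ereal \<bar>pos_part (\<lambda>x. um x + c) x\<bar>) \<in> borel_measurable lebesgue"
        unfolding pos_part_def by measurable
      show "AE x in lebesgue. ereal \<bar>pos_part (\<lambda>x. um x + c) x\<bar> \<le> 0"
        using umc by eventually_elim (auto simp: pos_part_def)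
    qed
    have z2: "Linf_norm (neg_part (\<lambda>x. up x - c)) \<le> 0"
      unfolding Linf_norm_def
    proof (rule esssup_I)
      show "(\<lambda>x. ereal \<bar>neg_part (\<lambda>x. up x - c) x\<bar>) \<in> borel_measurable lebesgue"
        unfolding neg_part_def by measurable
      show "AE x in lebesgue. ereal \<bar>neg_part (\<lambda>x. up x - c) x\<bar> \<le> 0"
        using upc by eventually_elim (auto simp: neg_part_def)
    qed
    from part1[of c] show False
    proof
      assume "ereal (c - lam) \<le> Linf_norm (pos_part (\<lambda>x. um x + c))"
      then have "ereal (c - lam) \<le> 0" using z1 by (rule order_trans)
      then show False using lc by simp
    next
      assume "ereal (c + lam) \<le> Linf_norm (neg_part (\<lambda>x. up x - c))"
      then have "ereal (c + lam) \<le> 0" using z2 by (rule order_trans)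
      then show False using lc by simp
    qed
  qed
  show ?thesis using part1 part2 by blast
qed

end
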